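(* Let $r\ge1$. The assignment \[ (i)\mapsto e_i,\qquad (i-1|i)\mapsto c_i^{\leftarrow},\qquad (i+1|i)\mapsto c_{i+1}^{\rightarrow},\qquad \theta\mapsto \omega \] defines an isomorphism of $\mathbb Z\times\mathbb Z^2$-graded algebras $\mathcal A^!_r\cong T_1^{\lambda,r}$. Moreover it induces isomorphisms of dg-algebras $(\mathcal A^!_r,0)\cong(T_1^{\lambda,r},0)$ and $(\mathcal A^!_r,d)\cong(T_1^{\lambda,r},d_1)$.
   Context: $\Bbbk$ is a field. $\mathcal Q_r$ is the quiver with vertices $0,1,\dots,r$, arrows $i|i+1:i\to i+1$ and $i+1|i:i+1\to i$ for $0\le i<r$, and a loop $\theta$ at $0$; $(i_1|\cdots|i_n)$ denotes the path through $i_1,\dots,i_n$ and $(i)$ the constant path. $\mathcal A^!_r$ is the quotient of the path algebra $\Bbbk\mathcal Q_r$ by $(i|i-1|i)=(i|i+1|i)$ for $0<i<r$, $\theta(0|1|0)=(0|1|0)\theta$, $\theta^2=0$; it is graded by (homological, $q$, $\lambda$)-degrees $\deg(i|i\pm1)=(0,1,0)$, $\deg\theta=(1,0,2)$. The differential $d$ on $\mathcal A^!_r$ is $d(\theta)=(0|1|0)$ and $d=0$ on the other generators. $T_1^{\lambda,r}$ is the dg-enhanced KLRW algebra with one black strand and $r$ red strands labelled $1$: braid-like diagrams (bottom to top; product = stacking) with a leftmost vertical blue strand $\lambda$, $r$ non-crossing red strands and one black strand which may cross red strands, carry dots, and, when it is immediately right of the blue strand, be nailed on the blue strand (nail: homological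 degree $1$), subject to: dots slide through black/red crossings; a black/red double crossing equals one dot on the black strand; a nailed strand's dot can slide through the nail; two consecutive nails on the strand give $0$. $(q,\lambda)$-degrees: dot $(2,0)$, black/red crossing $(1,0)$, nail $(0,2)$. The differential $d_1$ sends the nail to a dot and is zero on nail-free diagrams (graded Leibniz rule). In $T_1^{\lambda,r}$: $e_i$ is the idempotent with the black strand immediately right of the $i$-th red strand ($i=0$: immediately right of blue); $c_i^{\leftarrow}$ ($1\le i\le r$) is the diagram in which the black strand starts (bottom) right of the $i$-th red strand and ends (top) left of it, crossing it once; $c_{i+1}^{\rightarrow}$ ($0\le i<r$) is the diagram in which the black strand starts right of the $i$-th red strand and ends right of the $(i+1)$-th, crossing it once; $\omega$ is the nail on the black strand in idempotent $e_0$. *)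

theory Defs
  imports Main
begin

text \<open>A path is a pair (v, as) of a starting vertex v and a list of composable
arrows as = [a1,...,an] (s a1 = v, t ak = s a(k+1)); (v,[]) is the constant path (v).
Elements of the path algebra kQ are finitely supported functions from valid paths to
the field; the product is concatenation of paths: (v,as)(w,bs) = (v, as @ bs) if the
end of the first path is w, and 0 otherwise.\<close>

type_synonym 'e path = "nat \<times> 'e list"

fun is_chain :: "('e \<Rightarrow> nat) \<Rightarrow> ('e \<Rightarrow> nat) \<Rightarrow> nat \<Rightarrow> 'e list \<Rightarrow> bool" where
  "is_chain s t v [] = True"
| "is_chain s t v (a # as) = (s a = v \<and> is_chain s t (t a) as)"

fun pend :: "('e \<Rightarrow> nat) \<Rightarrow> nat \<Rightarrow> 'e list \<Rightarrow> nat" where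
  "pend t v [] = v"
| "pend t v (a # as) = pend t (t a) as"

definition valid_path ::
  "nat set \<Rightarrow> 'e set \<Rightarrow> ('e \<Rightarrow> nat) \<Rightarrow> ('e \<Rightarrow> nat) \<Rightarrow> 'e path \<Rightarrow> bool" where
  "valid_path V E s t p = (fst p \<in> V \<and> set (snd p) \<subseteq> E \<and> is_chain s t (fst p) (snd p))"

definition path_alg ::
  "nat set \<Rightarrow> 'e set \<Rightarrow> ('e \<Rightarrow> nat) \<Rightarrow> ('e \<Rightarrow> nat) \<Rightarrow> ('e path \<Rightarrow> 'k::field) set" where
  "path_alg V E s t = {f. finite {p. f p \<noteq> 0} \<and> (\<forall>p. f p \<noteq> 0 \<longrightarrow> valid_path V E s t p)}"

definition pth :: "'e path \<Rightarrow> ('e path \<Rightarrow> 'k::field)" where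
  "pth p = (\<lambda>q. if q = p then 1 else 0)"

definition padd :: "('e path \<Rightarrow> 'k::field) \<Rightarrow> ('e path \<Rightarrow> 'k) \<Rightarrow> ('e path \<Rightarrow> 'k)" where
  "padd f g = (\<lambda>p. f p + g p)"

definition pdiff :: "('e path \<Rightarrow> 'k::field) \<Rightarrow> ('e path \<Rightarrow> 'k) \<Rightarrow> ('e path \<Rightarrow> 'k)" where
  "pdiff f g = (\<lambda>p. f p - g p)"

definition psmult :: "'k::field \<Rightarrow> ('e path \<Rightarrow> 'k) \<Rightarrow> ('e path \<Rightarrow> 'k)" where
  "psmult c f = (\<lambda>p. c * f p)"

definition pmul :: "('e \<Rightarrow> nat) \<Rightarrow> ('e path \<Rightarrow> 'k::field) \<Rightarrow> ('e path \<Rightarrow> 'k) \<Rightarrow> ('e path \<Rightarrow> 'k)" where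
  "pmul t f g = (\<lambda>(v, as). \<Sum>k\<in>{0..length as}.
       f (v, take k as) * g (pend t v (take k as), drop k as))"

definition pone :: "nat set \<Rightarrow> ('e path \<Rightarrow> 'k::field)" where
  "pone V = (\<lambda>p. if snd p = [] \<and> fst p \<in> V then 1 else 0)"

inductive_set gen_ideal ::
  "nat set \<Rightarrow> 'e set \<Rightarrow> ('e \<Rightarrow> nat) \<Rightarrow> ('e \<Rightarrow> nat) \<Rightarrow> ('e path \<Rightarrow> 'k::field) set
     \<Rightarrow> ('e path \<Rightarrow> 'k) set"
  for V E s t R where
  gi_zero: "(\<lambda>_. 0) \<in> gen_ideal V E s t R"
| gi_gen: "x \<in> R \<Longrightarrow> x \<in> gen_ideal V E s t R"
| gi_add: "x \<in> gen_ideal V E s t R \<Longrightarrow> y \<in> gen_ideal V E s t R \<Longrightarrow> padd x y \<in> gen_ideal V E s t R"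
| gi_mult: "x \<in> gen_ideal V E s t R \<Longrightarrow> a \<in> path_alg V E s t \<Longrightarrow> b \<in> path_alg V E s t \<Longrightarrow>
     pmul t (pmul t a x) b \<in> gen_ideal V E s t R"

definition pmap :: "('e \<Rightarrow> 'f) \<Rightarrow> ('e path \<Rightarrow> 'k::field) \<Rightarrow> ('f path \<Rightarrow> 'k)" where
  "pmap \<psi> f = (\<lambda>(w, bs). \<Sum>p\<in>{p. f p \<noteq> 0 \<and> fst p = w \<and> map \<psi> (snd p) = bs}. f p)"

text \<open>Derivation of kQ (graded Leibniz rule with respect to the homological degree h)
determined by its values \<delta> on arrows:
d(a1\<cdot>\<cdot>\<cdot>an) = \<Sum>k (-1)^(h a1 + ... + h a(k-1)) a1\<cdot>\<cdot>\<cdot>a(k-1) d(ak) a(k+1)\<cdot>\<cdot>\<cdot>an.\<close>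
definition dpath :: "('e \<Rightarrow> nat) \<Rightarrow> ('e \<Rightarrow> int) \<Rightarrow> ('e \<Rightarrow> ('e path \<Rightarrow> 'k::field))
     \<Rightarrow> 'e path \<Rightarrow> ('e path \<Rightarrow> 'k)" where
  "dpath t h \<delta> p = (\<lambda>q. \<Sum>k<length (snd p).
      (if even (\<Sum>a\<leftarrow>take k (snd p). h a) then 1 else -1) *
      pmul t (pmul t (pth (fst p, take k (snd p))) (\<delta> (snd p ! k)))
        (pth (pend t (fst p) (take (Suc k) (snd p)), drop (Suc k) (snd p))) q)"

definition path_diff :: "('e \<Rightarrow> nat) \<Rightarrow> ('e \<Rightarrow> int) \<Rightarrow> ('e \<Rightarrow> ('e path \<Rightarrow> 'k::field))
     \<Rightarrow> ('e path \<Rightarrow> 'k) \<Rightarrow> ('e path \<Rightarrow> 'k)" where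
  "path_diff t h \<delta> f = (\<lambda>q. \<Sum>p\<in>{p. f p \<noteq> 0}. f p * dpath t h \<delta> p q)"

text \<open>Arrows of Q_r: Edge i j is the arrow (i|j), Theta the loop at 0.\<close>
datatype arrA = Edge nat nat | Theta

definition vertsA :: "nat \<Rightarrow> nat set" where "vertsA r = {0..r}"

definition arrowsA :: "nat \<Rightarrow> arrA set" where
  "arrowsA r = {Edge i (i+1) | i. i < r} \<union> {Edge (i+1) i | i. i < r} \<union> {Theta}"

fun srcA :: "arrA \<Rightarrow> nat" where "srcA (Edge i j) = i" | "srcA Theta = 0"
fun tgtA :: "arrA \<Rightarrow> nat" where "tgtA (Edge i j) = j" | "tgtA Theta = 0"

text \<open>(homological, q, lambda)-degree.\<close>
fun degA :: "arrA \<Rightarrow> int \<times> int \<times> int" where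
  "degA (Edge i j) = (0, 1, 0)" | "degA Theta = (1, 0, 2)"

definition relsA :: "nat \<Rightarrow> (arrA path \<Rightarrow> 'k::field) set" where
  "relsA r =
     {pdiff (pth (i, [Edge i (i-1), Edge (i-1) i])) (pth (i, [Edge i (i+1), Edge (i+1) i])) | i. 0 < i \<and> i < r}
   \<union> {pdiff (pth (0, [Theta, Edge 0 1, Edge 1 0])) (pth (0, [Edge 0 1, Edge 1 0, Theta]))}
   \<union> {pth (0, [Theta, Theta])}"

definition algA :: "nat \<Rightarrow> (arrA path \<Rightarrow> 'k::field) set" where
  "algA r = path_alg (vertsA r) (arrowsA r) srcA tgtA"

definition idealA :: "nat \<Rightarrow> (arrA path \<Rightarrow> 'k::field) set" where
  "idealA r = gen_ideal (vertsA r) (arrowsA r) srcA tgtA (relsA r)"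

fun deltaA :: "arrA \<Rightarrow> (arrA path \<Rightarrow> 'k::field)" where
  "deltaA Theta = pth (0, [Edge 0 1, Edge 1 0])"
| "deltaA (Edge i j) = (\<lambda>_. 0)"

definition dA :: "(arrA path \<Rightarrow> 'k::field) \<Rightarrow> (arrA path \<Rightarrow> 'k)" where
  "dA = path_diff tgtA (\<lambda>a. fst (degA a)) deltaA"

text \<open>A diagram with one black strand is a sequence (read from top to bottom) of
elementary pieces on the black strand: CrossL i = c_i^{\<leftarrow>} (black crosses the i-th red
strand, bottom right of it, top left of it), CrossR i = c_i^{\<rightarrow>} (bottom left of the
i-th red strand, top right of it), Dot i (a dot while in position e_i), Nail (the nail,
in position e_0).  Position i means: immediately right of the i-th red strand
(0 = immediately right of the blue strand).  We encode a piece as an arrow from its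
top position to its bottom position, so that the path [x1,...,xn] is the stacked
diagram x1 on top of x2 on top of ... on top of xn, i.e. the product x1 x2 ... xn
(product = stacking, a b = a on top of b).  Constant paths (i) are the idempotents
e_i.  Since there is a single black strand, planar isotopy classes of such diagrams
are exactly these paths.\<close>
datatype arrT = CrossL nat | CrossR nat | Dot nat | Nail

definition vertsT :: "nat \<Rightarrow> nat set" where "vertsT r = {0..r}"

definition arrowsT :: "nat \<Rightarrow> arrT set" where
  "arrowsT r = {CrossL i | i. 1 \<le> i \<and> i \<le> r} \<union> {CrossR i | i. 1 \<le> i \<and> i \<le> r}
     \<union> {Dot i | i. i \<le> r} \<union> {Nail}"

fun srcT :: "arrT \<Rightarrow> nat" where
  "srcT (CrossL i) = i - 1" | "srcT (CrossR i) = i" | "srcT (Dot i) = i" | "srcT Nail = 0"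
fun tgtT :: "arrT \<Rightarrow> nat" where
  "tgtT (CrossL i) = i" | "tgtT (CrossR i) = i - 1" | "tgtT (Dot i) = i" | "tgtT Nail = 0"

text \<open>(homological, q, lambda)-degree.\<close>
fun degT :: "arrT \<Rightarrow> int \<times> int \<times> int" where
  "degT (CrossL i) = (0, 1, 0)" | "degT (CrossR i) = (0, 1, 0)"
| "degT (Dot i) = (0, 2, 0)" | "degT Nail = (1, 0, 2)"

text \<open>Local relations: dots slide through black/red crossings; a black/red double
crossing equals a dot; the dot slides through the nail; two nails give 0.\<close>
definition relsT :: "nat \<Rightarrow> (arrT path \<Rightarrow> 'k::field) set" where
  "relsT r =
     {pdiff (pth (i-1, [Dot (i-1), CrossL i])) (pth (i-1, [CrossL i, Dot i])) | i. 1 \<le> i \<and> i \<le> r}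
   \<union> {pdiff (pth (i, [Dot i, CrossR i])) (pth (i, [CrossR i, Dot (i-1)])) | i. 1 \<le> i \<and> i \<le> r}
   \<union> {pdiff (pth (i, [CrossR i, CrossL i])) (pth (i, [Dot i])) | i. 1 \<le> i \<and> i \<le> r}
   \<union> {pdiff (pth (i-1, [CrossL i, CrossR i])) (pth (i-1, [Dot (i-1)])) | i. 1 \<le> i \<and> i \<le> r}
   \<union> {pdiff (pth (0, [Nail, Dot 0])) (pth (0, [Dot 0, Nail]))}
   \<union> {pth (0, [Nail, Nail])}"

definition algT :: "nat \<Rightarrow> (arrT path \<Rightarrow> 'k::field) set" where
  "algT r = path_alg (vertsT r) (arrowsT r) srcT tgtT"

definition idealT :: "nat \<Rightarrow> (arrT path \<Rightarrow> 'k::field) set" where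
  "idealT r = gen_ideal (vertsT r) (arrowsT r) srcT tgtT (relsT r)"

fun deltaT :: "arrT \<Rightarrow> (arrT path \<Rightarrow> 'k::field)" where
  "deltaT Nail = pth (0, [Dot 0])"
| "deltaT (CrossL i) = (\<lambda>_. 0)" | "deltaT (CrossR i) = (\<lambda>_. 0)" | "deltaT (Dot i) = (\<lambda>_. 0)"

definition dT :: "(arrT path \<Rightarrow> 'k::field) \<Rightarrow> (arrT path \<Rightarrow> 'k)" where
  "dT = path_diff tgtT (\<lambda>a. fst (degT a)) deltaT"

fun assign :: "arrA \<Rightarrow> arrT" where
  "assign (Edge i j) = (if j = i + 1 then CrossL j else CrossR i)"
| "assign Theta = Nail"

end

theory Submission
  imports Defs "HOL-Library.Function_Algebras"
begin


abbreviation supp :: "('a \<Rightarrow> 'k::field) \<Rightarrow> 'a set" where "supp f \<equiv> {p. f p \<noteq> 0}"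
abbreviation fs :: "('a \<Rightarrow> 'k::field) \<Rightarrow> bool" where "fs f \<equiv> finite (supp f)"

lemma sum_fun_apply: "(sum F A) x = sum (\<lambda>i. F i x) A"
  by (induction A rule: infinite_finite_induct) auto

lemma padd_eq: "padd f g = f + g" by (simp add: padd_def fun_eq_iff)
lemma pdiff_eq: "pdiff f g = f - g" by (simp add: pdiff_def fun_eq_iff)
lemma zero_eq: "(\<lambda>_. 0) = 0" by (simp add: fun_eq_iff)

lemma fs_add: "fs f \<Longrightarrow> fs g \<Longrightarrow> fs (f + g)"
  by (rule finite_subset[of _ "supp f \<union> supp g"]) auto
lemma fs_diff: "fs f \<Longrightarrow> fs g \<Longrightarrow> fs (f - g)"
  by (rule finite_subset[of _ "supp f \<union> supp g"]) auto
lemma fs_uminus: "fs f \<Longrightarrow> fs (- f)"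
  by (rule finite_subset[of _ "supp f"]) auto
lemma fs_sm: "fs f \<Longrightarrow> fs (psmult c f)"
  by (rule finite_subset[of _ "supp f"]) (auto simp: psmult_def)
lemma fs_zero: "fs (0::'a \<Rightarrow> 'k::field)" by simp
lemma fs_pth: "fs (pth p :: _ \<Rightarrow> 'k::field)"
  by (rule finite_subset[of _ "{p}"]) (auto simp: pth_def)
lemma fs_sum: "finite A \<Longrightarrow> (\<And>i. i \<in> A \<Longrightarrow> fs (F i)) \<Longrightarrow> fs (sum F (A::'i set) :: 'a \<Rightarrow> 'k::field)"
proof (induction A rule: finite_induct)
  case (insert a A)
  have "sum F (insert a A) = F a + sum F A" using insert by simp
  then show ?case using insert fs_add[of "F a" "sum F A"] by simp
qed simp

lemma sm_add: "psmult c (f + g) = psmult c f + psmult c g" by (simp add: psmult_def fun_eq_iff algebra_simps)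
lemma sm_diff: "psmult c (f - g) = psmult c f - psmult c g" by (simp add: psmult_def fun_eq_iff algebra_simps)
lemma sm_zero: "psmult c 0 = 0" by (simp add: psmult_def fun_eq_iff)
lemma sm_sm: "psmult c (psmult d f) = psmult (c*d) f" by (simp add: psmult_def fun_eq_iff)
lemma sm_one: "psmult 1 f = f" by (simp add: psmult_def fun_eq_iff)
lemma sm_0: "psmult 0 f = 0" by (simp add: psmult_def fun_eq_iff)
lemma sm_m1: "psmult (-1) f = - f" by (simp add: psmult_def fun_eq_iff)
lemma sm_sum: "psmult c (sum F A) = sum (\<lambda>i. psmult c (F i)) A"
  by (simp add: fun_eq_iff psmult_def sum_fun_apply sum_distrib_left)

lemma expand: "fs f \<Longrightarrow> f = (\<Sum>p\<in>supp f. psmult (f p) (pth p))"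
proof (rule ext)
  fix q assume "fs f"
  have "(\<Sum>p\<in>supp f. psmult (f p) (pth p)) q = (\<Sum>p\<in>supp f. if q = p then f p else 0)"
    by (simp add: sum_fun_apply psmult_def pth_def, intro sum.cong) auto
  also have "\<dots> = f q" using \<open>fs f\<close> by (simp add: sum.delta)
  finally show "f q = (\<Sum>p\<in>supp f. psmult (f p) (pth p)) q" by simp
qed

definition linmap :: "(('e path \<Rightarrow> 'k::field) \<Rightarrow> ('f path \<Rightarrow> 'k)) \<Rightarrow> bool" where
  "linmap L \<longleftrightarrow> (\<forall>x y. fs x \<longrightarrow> fs y \<longrightarrow> L (x + y) = L x + L y) \<and> (\<forall>c x. fs x \<longrightarrow> L (psmult c x) = psmult c (L x))"

lemma linmap_zero: "linmap L \<Longrightarrow> L 0 = 0"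
proof -
  assume "linmap L"
  then have "L (psmult 0 0) = psmult 0 (L 0)" unfolding linmap_def by auto
  then show ?thesis by (metis sm_0)
qed

lemma linmap_sum: "finite A \<Longrightarrow> linmap L \<Longrightarrow> (\<And>i. i \<in> A \<Longrightarrow> fs (F i)) \<Longrightarrow> L (sum F A) = (\<Sum>i\<in>A. L (F i))"
proof (induction A rule: finite_induct)
  case empty then show ?case using linmap_zero[of L] by (metis sum.empty)
next
  case (insert a A)
  then have "L (sum F (insert a A)) = L (F a + sum F A)" by simp
  also have "\<dots> = L (F a) + L (sum F A)" using insert fs_sum[of A F] by (auto simp: linmap_def)
  also have "\<dots> = L (F a) + (\<Sum>i\<in>A. L (F i))" using insert by simp
  also have "\<dots> = (\<Sum>i\<in>insert a A. L (F i))" using sum.insert[OF insert.hyps, of "\<lambda>i. L (F i)"] by (rule sym)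
  finally show ?case .
qed

lemma lin_ext:
  assumes "linmap L1" "linmap L2" "fs x" "\<And>p. x p \<noteq> 0 \<Longrightarrow> L1 (pth p) = L2 (pth p)"
  shows "L1 x = L2 x"
proof -
  have "L1 x = (\<Sum>p\<in>supp x. L1 (psmult (x p) (pth p)))"
    using assms by (subst expand, simp, subst linmap_sum) (auto intro: fs_sm fs_pth)
  also have "\<dots> = (\<Sum>p\<in>supp x. L2 (psmult (x p) (pth p)))"
  proof (rule sum.cong)
    fix p assume "p \<in> supp x"
    then show "L1 (psmult (x p) (pth p)) = L2 (psmult (x p) (pth p))"
    proof -
      have "fs (pth p :: _ \<Rightarrow> 'b)" by (rule fs_pth)
      then have "L1 (psmult (x p) (pth p)) = psmult (x p) (L1 (pth p))" "L2 (psmult (x p) (pth p)) = psmult (x p) (L2 (pth p))"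
        using assms(1,2) unfolding linmap_def by blast+
      then show ?thesis using assms(4)[of p] \<open>p \<in> supp x\<close> by simp
    qed
  qed simp
  also have "\<dots> = L2 x"
    using assms by (subst (2) expand, simp, subst linmap_sum) (auto intro: fs_sm fs_pth)
  finally show ?thesis .
qed

definition subsp :: "('e path \<Rightarrow> 'k::field) set \<Rightarrow> bool" where
  "subsp I \<longleftrightarrow> 0 \<in> I \<and> (\<forall>x\<in>I. \<forall>y\<in>I. x + y \<in> I) \<and> (\<forall>c. \<forall>x\<in>I. psmult c x \<in> I)"

lemma subsp_sum: "subsp I \<Longrightarrow> (\<And>i. i \<in> A \<Longrightarrow> F i \<in> I) \<Longrightarrow> sum F A \<in> I"
  by (induction A rule: infinite_finite_induct) (auto simp: subsp_def)
lemma subsp_diff: "subsp I \<Longrightarrow> x \<in> I \<Longrightarrow> y \<in> I \<Longrightarrow> x - y \<in> I"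
proof -
  assume a: "subsp I" "x \<in> I" "y \<in> I"
  then have "x + psmult (-1) y \<in> I" by (auto simp: subsp_def)
  then show ?thesis by (simp add: sm_m1)
qed
lemma subsp_uminus: "subsp I \<Longrightarrow> y \<in> I \<Longrightarrow> - y \<in> I"
  by (metis sm_m1 subsp_def)

lemma lin_mem:
  assumes "linmap L" "subsp I" "fs x" "\<And>p. x p \<noteq> 0 \<Longrightarrow> L (pth p) \<in> I"
  shows "L x \<in> I"
proof -
  have "L x = (\<Sum>p\<in>supp x. L (psmult (x p) (pth p)))"
    using assms by (subst expand, simp, subst linmap_sum) (auto intro: fs_sm fs_pth)
  also have "\<dots> = (\<Sum>p\<in>supp x. psmult (x p) (L (pth p)))"
    using assms(1) fs_pth unfolding linmap_def by (intro sum.cong) blast+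
  also have "\<dots> \<in> I" using assms by (intro subsp_sum) (auto simp: subsp_def)
  finally show ?thesis .
qed



lemma pend_append[simp]: "pend t v (l1 @ l2) = pend t (pend t v l1) l2"
  by (induction l1 arbitrary: v) auto
lemma pend_last: "pend t v as = (if as = [] then v else t (last as))"
  by (induction as arbitrary: v) auto
lemma chain_append[simp]: "is_chain s t v (l1 @ l2) = (is_chain s t v l1 \<and> is_chain s t (pend t v l1) l2)"
  by (induction l1 arbitrary: v) auto
lemma pend_map: "(\<And>a. a \<in> set as \<Longrightarrow> t' (f a) = t a) \<Longrightarrow> pend t' v (map f as) = pend t v as"
  by (induction as arbitrary: v) auto

lemma sum_single: "finite A \<Longrightarrow> (\<And>k. k \<in> A \<Longrightarrow> k \<noteq> m \<Longrightarrow> T k = 0) \<Longrightarrow> sum T A = (if m \<in> A then T m else 0)"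
proof -
  assume a: "finite A" "\<And>k. k \<in> A \<Longrightarrow> k \<noteq> m \<Longrightarrow> T k = 0"
  have "sum T A = sum (\<lambda>k. if k = m then T k else 0) A" using a by (intro sum.cong) auto
  also have "\<dots> = (if m \<in> A then T m else 0)" using a by (simp add: sum.delta')
  finally show ?thesis .
qed

lemma fs_add': "fs f \<Longrightarrow> fs g \<Longrightarrow> finite {p. f p + g p \<noteq> 0}"
  using fs_add[of f g] by simp
lemma fs_diff': "fs f \<Longrightarrow> fs g \<Longrightarrow> finite {p. f p - g p \<noteq> 0}"
  using fs_diff[of f g] by simp

lemma pmul_add_left: "pmul t (f + g) h = pmul t f h + pmul t g h"
  by (simp add: pmul_def fun_eq_iff algebra_simps sum.distrib split: prod.split)
lemma pmul_add_right: "pmul t h (f + g) = pmul t h f + pmul t h g"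
  by (simp add: pmul_def fun_eq_iff algebra_simps sum.distrib split: prod.split)
lemma pmul_diff_left: "pmul t (f - g) h = pmul t f h - pmul t g h"
  by (simp add: pmul_def fun_eq_iff algebra_simps sum_subtractf split: prod.split)
lemma pmul_diff_right: "pmul t h (f - g) = pmul t h f - pmul t h g"
  by (simp add: pmul_def fun_eq_iff algebra_simps sum_subtractf split: prod.split)
lemma pmul_sm_left: "pmul t (psmult c f) h = psmult c (pmul t f h)"
  by (simp add: pmul_def psmult_def fun_eq_iff algebra_simps sum_distrib_left split: prod.split)
lemma pmul_sm_right: "pmul t h (psmult c f) = psmult c (pmul t h f)"
  by (simp add: pmul_def psmult_def fun_eq_iff algebra_simps sum_distrib_left split: prod.split)
lemma pmul_zero_left: "pmul t 0 h = 0"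
  by (simp add: pmul_def fun_eq_iff split: prod.split)
lemma pmul_zero_right: "pmul t h 0 = 0"
  by (simp add: pmul_def fun_eq_iff split: prod.split)

lemma linmap_pmul_left: "linmap (\<lambda>x. pmul t x y)"
  by (simp add: linmap_def pmul_add_left pmul_sm_left)
lemma linmap_pmul_right: "linmap (\<lambda>y. pmul t x y)"
  by (simp add: linmap_def pmul_add_right pmul_sm_right)

lemma pmul_pth: "pmul t (pth p) (pth q) =
   (if pend t (fst p) (snd p) = fst q then pth (fst p, snd p @ snd q) else 0)"
proof (rule ext, clarify)
  fix u cs
  obtain v as where p: "p = (v, as)" by force
  obtain w bs where q: "q = (w, bs)" by force
  let ?T = "\<lambda>k. pth p (u, take k cs) * pth q (pend t u (take k cs), drop k cs)"
  have z: "?T k = 0" if "k \<in> {0..length cs}" "k \<noteq> length as" for k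
    using that by (auto simp: pth_def p)
  have "pmul t (pth p) (pth q) (u, cs) = (\<Sum>k\<in>{0..length cs}. ?T k)" by (simp add: pmul_def)
  also have "\<dots> = (if length as \<in> {0..length cs} then ?T (length as) else 0)"
    using z by (intro sum_single) auto
  also have "\<dots> = (if pend t (fst p) (snd p) = fst q then pth (fst p, snd p @ snd q) else 0) (u, cs)"
    by (auto simp: pth_def p q append_eq_conv_conj) (metis append_take_drop_id)
  finally show "pmul t (pth p) (pth q) (u, cs) = (if pend t (fst p) (snd p) = fst q then pth (fst p, snd p @ snd q) else 0) (u, cs)" .
qed

lemma pmul_pth_cons: "pmul t (pth (v, [a])) (pth (t a, as)) = pth (v, a # as)"
  by (simp add: pmul_pth)

lemma supp_pmul: "pmul t f g (v, as) \<noteq> 0 \<Longrightarrow> \<exists>k\<le>length as. f (v, take k as) \<noteq> 0 \<and> g (pend t v (take k as), drop k as) \<noteq> 0"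
  unfolding pmul_def by (auto elim!: sum.not_neutral_contains_not_neutral)

lemma fs_pmul: assumes "fs f" "fs g" shows "fs (pmul t f g)"
proof (rule finite_subset)
  show "supp (pmul t f g) \<subseteq> (\<lambda>(p, q). (fst p, snd p @ snd q)) ` (supp f \<times> supp g)"
  proof clarify
    fix v as assume "pmul t f g (v, as) \<noteq> 0"
    then obtain k where "f (v, take k as) \<noteq> 0" "g (pend t v (take k as), drop k as) \<noteq> 0"
      using supp_pmul by blast
    then show "(v, as) \<in> (\<lambda>(p, q). (fst p, snd p @ snd q)) ` (supp f \<times> supp g)"
      by (intro image_eqI[of _ _ "((v, take k as), (pend t v (take k as), drop k as))"]) auto
  qed
  show "finite ((\<lambda>(p, q). (fst p, snd p @ snd q)) ` (supp f \<times> supp g))" using assms by auto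
qed

definition quiv :: "nat set \<Rightarrow> 'e set \<Rightarrow> ('e \<Rightarrow> nat) \<Rightarrow> ('e \<Rightarrow> nat) \<Rightarrow> bool" where
  "quiv V E s t \<longleftrightarrow> finite V \<and> (\<forall>a\<in>E. s a \<in> V \<and> t a \<in> V)"

lemma valid_pend: "quiv V E s t \<Longrightarrow> valid_path V E s t p \<Longrightarrow> pend t (fst p) (snd p) \<in> V"
  unfolding quiv_def valid_path_def by (subst pend_last) (auto dest!: last_in_set)

lemma path_alg_iff: "f \<in> path_alg V E s t \<longleftrightarrow> fs f \<and> (\<forall>p. f p \<noteq> 0 \<longrightarrow> valid_path V E s t p)"
  by (simp add: path_alg_def)

lemma pth_alg: "valid_path V E s t p \<Longrightarrow> pth p \<in> path_alg V E s t"
  by (auto simp: path_alg_iff fs_pth pth_def)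

lemma alg_add: "f \<in> path_alg V E s t \<Longrightarrow> g \<in> path_alg V E s t \<Longrightarrow> f + g \<in> path_alg V E s t"
  unfolding path_alg_iff by (intro conjI fs_add allI impI) (auto, metis add_0)
lemma alg_diff: "f \<in> path_alg V E s t \<Longrightarrow> g \<in> path_alg V E s t \<Longrightarrow> f - g \<in> path_alg V E s t"
  unfolding path_alg_iff by (intro conjI fs_diff allI impI) (auto, metis diff_self)
lemma alg_sm: "f \<in> path_alg V E s t \<Longrightarrow> psmult c f \<in> path_alg V E s t"
  by (auto simp: path_alg_iff fs_sm psmult_def)
lemma alg_zero: "0 \<in> path_alg V E s t"
  by (auto simp: path_alg_iff)

lemma alg_pmul: assumes "f \<in> path_alg V E s t" "g \<in> path_alg V E s t" shows "pmul t f g \<in> path_alg V E s t"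
proof -
  have "valid_path V E s t p" if nz: "pmul t f g p \<noteq> 0" for p
  proof -
    obtain v as where p: "p = (v, as)" by force
    then obtain k where "f (v, take k as) \<noteq> 0" "g (pend t v (take k as), drop k as) \<noteq> 0"
      using supp_pmul[of t f g v as] nz p by blast
    then have "valid_path V E s t (v, take k as)" "valid_path V E s t (pend t v (take k as), drop k as)"
      using assms by (auto simp: path_alg_iff)
    then show ?thesis unfolding p valid_path_def
      by (metis append_take_drop_id chain_append fst_conv set_append snd_conv sup.bounded_iff)
  qed
  then show ?thesis using assms fs_pmul by (auto simp: path_alg_iff)
qed

lemma pmul_one_left: assumes "\<And>p. f p \<noteq> 0 \<Longrightarrow> fst p \<in> V" shows "pmul t (pone V) f = f"
proof (rule ext, clarify)
  fix v as
  have z: "pone V (v, take k as) * f (pend t v (take k as), drop k as) = 0" if "k \<in> {0..length as}" "k \<noteq> 0" for k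
    using that by (auto simp: pone_def)
  have "pmul t (pone V) f (v, as) = (\<Sum>k\<in>{0..length as}. pone V (v, take k as) * f (pend t v (take k as), drop k as))"
    by (simp add: pmul_def)
  also have "\<dots> = pone V (v, take 0 as) * f (pend t v (take 0 as), drop 0 as)"
    using z by (subst sum_single[of _ 0]) auto
  also have "\<dots> = f (v, as)" using assms[of "(v, as)"] by (auto simp: pone_def)
  finally show "pmul t (pone V) f (v, as) = f (v, as)" .
qed

lemma pmul_one_right: assumes "\<And>p. f p \<noteq> 0 \<Longrightarrow> pend t (fst p) (snd p) \<in> V" shows "pmul t f (pone V) = f"
proof (rule ext, clarify)
  fix v as
  have z: "f (v, take k as) * pone V (pend t v (take k as), drop k as) = 0" if "k \<in> {0..length as}" "k \<noteq> length as" for k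
    using that by (auto simp: pone_def)
  have "pmul t f (pone V) (v, as) = (\<Sum>k\<in>{0..length as}. f (v, take k as) * pone V (pend t v (take k as), drop k as))"
    by (simp add: pmul_def)
  also have "\<dots> = f (v, take (length as) as) * pone V (pend t v (take (length as) as), drop (length as) as)"
    using z by (subst sum_single[of _ "length as"]) auto
  also have "\<dots> = f (v, as)" using assms[of "(v, as)"] by (auto simp: pone_def)
  finally show "pmul t f (pone V) (v, as) = f (v, as)" .
qed

lemma one_alg: "quiv V E s t \<Longrightarrow> pone V \<in> path_alg V E s t"
  unfolding path_alg_iff quiv_def
  by (auto simp: pone_def valid_path_def intro: finite_subset[of _ "(\<lambda>v. (v, [])) ` V"])

lemma pmul_one_left_alg: "f \<in> path_alg V E s t \<Longrightarrow> pmul t (pone V) f = f"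
  by (rule pmul_one_left) (auto simp: path_alg_iff valid_path_def)
lemma pmul_one_right_alg: "quiv V E s t \<Longrightarrow> f \<in> path_alg V E s t \<Longrightarrow> pmul t f (pone V) = f"
  by (rule pmul_one_right) (auto simp: path_alg_iff intro: valid_pend)



lemma linmapI: "(\<And>x y. fs x \<Longrightarrow> fs y \<Longrightarrow> L (x + y) = L x + L y) \<Longrightarrow> (\<And>c x. fs x \<Longrightarrow> L (psmult c x) = psmult c (L x)) \<Longrightarrow> linmap L"
  unfolding linmap_def by blast
lemma linmap_add: "linmap L \<Longrightarrow> fs x \<Longrightarrow> fs y \<Longrightarrow> L (x + y) = L x + L y"
  unfolding linmap_def by blast
lemma linmap_sm: "linmap L \<Longrightarrow> fs x \<Longrightarrow> L (psmult c x) = psmult c (L x)"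
  unfolding linmap_def by blast
lemma linmap_comp: fixes L1 :: "('f path \<Rightarrow> 'k::field) \<Rightarrow> ('g path \<Rightarrow> 'k)" and L2 :: "('e path \<Rightarrow> 'k) \<Rightarrow> ('f path \<Rightarrow> 'k)"
  assumes l1: "linmap L1" and l2: "linmap L2" and f: "\<And>x. fs x \<Longrightarrow> fs (L2 x)"
  shows "linmap (\<lambda>x. L1 (L2 x))"
proof (rule linmapI)
  fix x y :: "'e path \<Rightarrow> 'k" assume "fs x" "fs y"
  then show "L1 (L2 (x + y)) = L1 (L2 x) + L1 (L2 y)"
    using linmap_add[OF l2, of x y] linmap_add[OF l1, of "L2 x" "L2 y"] f by simp
next
  fix c and x :: "'e path \<Rightarrow> 'k" assume "fs x"
  then show "L1 (L2 (psmult c x)) = psmult c (L1 (L2 x))"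
    using linmap_sm[OF l2, of x c] linmap_sm[OF l1, of "L2 x" c] f by simp
qed
lemma linmap_diff: fixes L1 L2 :: "('e path \<Rightarrow> 'k::field) \<Rightarrow> ('f path \<Rightarrow> 'k)" assumes l1: "linmap L1" and l2: "linmap L2" shows "linmap (\<lambda>x. L1 x - L2 x)"
proof (rule linmapI)
  fix x y :: "'e path \<Rightarrow> 'k" assume "fs x" "fs y"
  then show "L1 (x + y) - L2 (x + y) = (L1 x - L2 x) + (L1 y - L2 y)"
    using linmap_add[OF l2, of x y] linmap_add[OF l1, of x y] by simp
next
  fix c and x :: "'e path \<Rightarrow> 'k" assume "fs x"
  then show "L1 (psmult c x) - L2 (psmult c x) = psmult c (L1 x - L2 x)"
    using linmap_sm[OF l2, of x c] linmap_sm[OF l1, of x c] by (simp add: sm_diff)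
qed
lemma linmap_id: "linmap (\<lambda>x. x)"
  unfolding linmap_def by simp

lemma subsp_alg: "subsp (path_alg V E s t)"
  by (simp add: subsp_def alg_zero alg_add alg_sm)

context
  fixes V :: "nat set" and E :: "'e set" and s t :: "'e \<Rightarrow> nat" and R :: "('e path \<Rightarrow> 'k::field) set"
  assumes Q: "quiv V E s t" and R: "R \<subseteq> path_alg V E s t"
begin

lemma ideal_alg: "x \<in> gen_ideal V E s t R \<Longrightarrow> x \<in> path_alg V E s t"
proof (induction rule: gen_ideal.induct)
  case gi_zero then show ?case using alg_zero by (metis zero_eq)
next
  case (gi_gen x) then show ?case using R by auto
next
  case (gi_add x y) then show ?case by (metis padd_eq alg_add)
next
  case (gi_mult x a b) then show ?case by (simp add: alg_pmul)
qed

lemma ideal_zero: "0 \<in> gen_ideal V E s t R"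
  using gen_ideal.gi_zero by (metis zero_eq)
lemma ideal_add: "x \<in> gen_ideal V E s t R \<Longrightarrow> y \<in> gen_ideal V E s t R \<Longrightarrow> x + y \<in> gen_ideal V E s t R"
  using gen_ideal.gi_add by (metis padd_eq)
lemma ideal_lmul: "a \<in> path_alg V E s t \<Longrightarrow> x \<in> gen_ideal V E s t R \<Longrightarrow> pmul t a x \<in> gen_ideal V E s t R"
  using gen_ideal.gi_mult[of x V E s t R a "pone V"] pmul_one_right_alg[OF Q] alg_pmul ideal_alg one_alg[OF Q] by metis
lemma ideal_rmul: "b \<in> path_alg V E s t \<Longrightarrow> x \<in> gen_ideal V E s t R \<Longrightarrow> pmul t x b \<in> gen_ideal V E s t R"
  using gen_ideal.gi_mult[of x V E s t R "pone V" b] pmul_one_left_alg ideal_alg one_alg[OF Q] by metis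
lemma ideal_mul3: "a \<in> path_alg V E s t \<Longrightarrow> b \<in> path_alg V E s t \<Longrightarrow> x \<in> gen_ideal V E s t R \<Longrightarrow> pmul t (pmul t a x) b \<in> gen_ideal V E s t R"
  using gen_ideal.gi_mult by metis
lemma ideal_sm: "x \<in> gen_ideal V E s t R \<Longrightarrow> psmult c x \<in> gen_ideal V E s t R"
proof -
  assume x: "x \<in> gen_ideal V E s t R"
  have "pmul t (psmult c (pone V)) x = psmult c x"
    using x ideal_alg[OF x] by (simp add: pmul_sm_left pmul_one_left_alg)
  moreover have "pmul t (psmult c (pone V)) x \<in> gen_ideal V E s t R"
    using x by (intro ideal_lmul alg_sm one_alg[OF Q])
  ultimately show ?thesis by simp
qed
lemma ideal_subsp: "subsp (gen_ideal V E s t R)"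
  by (simp add: subsp_def ideal_zero ideal_add ideal_sm)
lemma ideal_diff: "x \<in> gen_ideal V E s t R \<Longrightarrow> y \<in> gen_ideal V E s t R \<Longrightarrow> x - y \<in> gen_ideal V E s t R"
  by (rule subsp_diff[OF ideal_subsp])
lemma ideal_uminus: "x \<in> gen_ideal V E s t R \<Longrightarrow> - x \<in> gen_ideal V E s t R"
  by (rule subsp_uminus[OF ideal_subsp])
lemma ideal_gen: "x \<in> R \<Longrightarrow> x \<in> gen_ideal V E s t R"
  by (rule gen_ideal.gi_gen)

end

abbreviation cm :: "('e \<Rightarrow> 'f list) \<Rightarrow> 'e list \<Rightarrow> 'f list" where "cm \<sigma> as \<equiv> concat (map \<sigma> as)"

definition subst :: "('e \<Rightarrow> 'f list) \<Rightarrow> ('e path \<Rightarrow> 'k::field) \<Rightarrow> ('f path \<Rightarrow> 'k)" where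
  "subst \<sigma> f = (\<lambda>(w, bs). \<Sum>p\<in>{p. f p \<noteq> 0 \<and> fst p = w \<and> cm \<sigma> (snd p) = bs}. f p)"

lemma pmap_subst: "pmap \<psi> f = subst (\<lambda>a. [\<psi> a]) f"
proof -
  have "cm (\<lambda>a. [\<psi> a]) l = map \<psi> l" for l by (induction l) auto
  then show ?thesis by (simp add: pmap_def subst_def)
qed

lemma subst_eq: assumes "fs f" "finite S" "supp f \<subseteq> S"
  shows "subst \<sigma> f q = (\<Sum>p\<in>S. if (fst p, cm \<sigma> (snd p)) = q then f p else 0)"
proof -
  obtain w bs where q: "q = (w, bs)" by force
  have "{p. f p \<noteq> 0 \<and> fst p = w \<and> cm \<sigma> (snd p) = bs} = {p\<in>S. f p \<noteq> 0 \<and> (fst p, cm \<sigma> (snd p)) = q}"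
    using assms q by auto
  then have "subst \<sigma> f q = (\<Sum>p\<in>{p\<in>S. f p \<noteq> 0 \<and> (fst p, cm \<sigma> (snd p)) = q}. f p)"
    by (simp add: subst_def q)
  also have "\<dots> = (\<Sum>p\<in>S. if f p \<noteq> 0 \<and> (fst p, cm \<sigma> (snd p)) = q then f p else 0)"
    using assms by (simp add: sum.inter_filter)
  also have "\<dots> = (\<Sum>p\<in>S. if (fst p, cm \<sigma> (snd p)) = q then f p else 0)"
    by (intro sum.cong) auto
  finally show ?thesis .
qed

lemma linmap_subst: "linmap (subst \<sigma>)"
  unfolding linmap_def
proof (intro conjI allI impI)
  fix x y :: "'a path \<Rightarrow> 'b" assume xy: "fs x" "fs y"
  show "subst \<sigma> (x + y) = subst \<sigma> x + subst \<sigma> y"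
  proof (rule ext)
    fix q
    let ?S = "supp x \<union> supp y"
    have f: "finite ?S" using xy by simp
    have "subst \<sigma> (x + y) q = (\<Sum>p\<in>?S. if (fst p, cm \<sigma> (snd p)) = q then (x + y) p else 0)"
      using xy f by (intro subst_eq fs_add) auto
    also have "\<dots> = (\<Sum>p\<in>?S. if (fst p, cm \<sigma> (snd p)) = q then x p else 0) + (\<Sum>p\<in>?S. if (fst p, cm \<sigma> (snd p)) = q then y p else 0)"
      by (simp only: sum.distrib[symmetric]) (intro sum.cong, auto)
    also have "\<dots> = subst \<sigma> x q + subst \<sigma> y q"
      using xy f by (simp add: subst_eq[of _ ?S])
    finally show "subst \<sigma> (x + y) q = (subst \<sigma> x + subst \<sigma> y) q" by simp
  qed
next
  fix c and x :: "'a path \<Rightarrow> 'b" assume x: "fs x"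
  show "subst \<sigma> (psmult c x) = psmult c (subst \<sigma> x)"
  proof (rule ext)
    fix q
    have "subst \<sigma> (psmult c x) q = (\<Sum>p\<in>supp x. if (fst p, cm \<sigma> (snd p)) = q then (psmult c x) p else 0)"
      using x by (intro subst_eq fs_sm) (auto simp: psmult_def)
    also have "\<dots> = c * (\<Sum>p\<in>supp x. if (fst p, cm \<sigma> (snd p)) = q then x p else 0)"
      by (simp add: sum_distrib_left psmult_def, intro sum.cong, auto simp: psmult_def)
    also have "\<dots> = psmult c (subst \<sigma> x) q"
      using x by (simp add: subst_eq[of _ "supp x"] psmult_def)
    finally show "subst \<sigma> (psmult c x) q = psmult c (subst \<sigma> x) q" .
  qed
qed

lemma subst_pth: "subst \<sigma> (pth p :: _ \<Rightarrow> 'k::field) = pth (fst p, cm \<sigma> (snd p))"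
proof (rule ext)
  fix q
  have "subst \<sigma> (pth p :: _ \<Rightarrow> 'k) q = (\<Sum>p'\<in>{p}. if (fst p', cm \<sigma> (snd p')) = q then (pth p :: _ \<Rightarrow> 'k) p' else 0)"
    by (intro subst_eq fs_pth) (auto simp: pth_def)
  then show "subst \<sigma> (pth p :: _ \<Rightarrow> 'k) q = pth (fst p, cm \<sigma> (snd p)) q"
    by (auto simp: pth_def)
qed

lemma subst_zero: "subst \<sigma> 0 = 0"
  by (rule linmap_zero[OF linmap_subst])

lemma fs_subst: assumes "fs f" shows "fs (subst \<sigma> f)"
proof (rule finite_subset)
  show "supp (subst \<sigma> f) \<subseteq> (\<lambda>p. (fst p, cm \<sigma> (snd p))) ` supp f"
  proof
    fix q assume "q \<in> supp (subst \<sigma> f)"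
    then have "(\<Sum>p\<in>supp f. if (fst p, cm \<sigma> (snd p)) = q then f p else 0) \<noteq> 0"
      using assms by (simp add: subst_eq[of _ "supp f"])
    then obtain p where "p \<in> supp f" "(fst p, cm \<sigma> (snd p)) = q"
      by (auto elim!: sum.not_neutral_contains_not_neutral split: if_splits)
    then show "q \<in> (\<lambda>p. (fst p, cm \<sigma> (snd p))) ` supp f" by force
  qed
qed (use assms in simp)

definition gsub :: "nat set \<Rightarrow> 'e set \<Rightarrow> ('e \<Rightarrow> nat) \<Rightarrow> ('e \<Rightarrow> nat) \<Rightarrow> nat set \<Rightarrow> 'f set \<Rightarrow> ('f \<Rightarrow> nat) \<Rightarrow> ('f \<Rightarrow> nat) \<Rightarrow> ('e \<Rightarrow> 'f list) \<Rightarrow> bool" where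
  "gsub V E s t V' E' s' t' \<sigma> \<longleftrightarrow> V \<subseteq> V' \<and> (\<forall>a\<in>E. \<sigma> a \<noteq> [] \<and> set (\<sigma> a) \<subseteq> E' \<and> is_chain s' t' (s a) (\<sigma> a) \<and> t' (last (\<sigma> a)) = t a)"

lemma gsub_pend: "gsub V E s t V' E' s' t' \<sigma> \<Longrightarrow> set as \<subseteq> E \<Longrightarrow> pend t' v (cm \<sigma> as) = pend t v as"
proof (induction as arbitrary: v)
  case (Cons a as)
  then have "pend t' v (\<sigma> a) = t a" unfolding gsub_def by (subst pend_last) auto
  then show ?case using Cons by simp
qed simp

lemma gsub_chain: "gsub V E s t V' E' s' t' \<sigma> \<Longrightarrow> set as \<subseteq> E \<Longrightarrow> is_chain s t v as \<Longrightarrow> is_chain s' t' v (cm \<sigma> as)"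
proof (induction as arbitrary: v)
  case (Cons a as)
  then have "pend t' v (\<sigma> a) = t a" unfolding gsub_def by (subst pend_last) auto
  then show ?case using Cons by (auto simp: gsub_def)
qed simp

lemma gsub_valid: "gsub V E s t V' E' s' t' \<sigma> \<Longrightarrow> valid_path V E s t p \<Longrightarrow> valid_path V' E' s' t' (fst p, cm \<sigma> (snd p))"
  unfolding valid_path_def using gsub_chain[of V E s t V' E' s' t' \<sigma> "snd p" "fst p"]
  by (auto simp: gsub_def)

lemma subst_alg: assumes "gsub V E s t V' E' s' t' \<sigma>" "f \<in> path_alg V E s t"
  shows "subst \<sigma> f \<in> path_alg V' E' s' t'"
proof (rule lin_mem[OF linmap_subst subsp_alg])
  show "fs f" using assms(2) by (simp add: path_alg_iff)
  fix p assume "f p \<noteq> 0"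
  then have "valid_path V E s t p" using assms(2) unfolding path_alg_def by blast
  then show "subst \<sigma> (pth p) \<in> path_alg V' E' s' t'" unfolding subst_pth by (intro pth_alg gsub_valid[OF assms(1)])
qed

lemma subst_mult: assumes g: "gsub V E s t V' E' s' t' \<sigma>" and x: "x \<in> path_alg V E s t" and y: "y \<in> path_alg V E s t"
  shows "subst \<sigma> (pmul t x y) = pmul t' (subst \<sigma> x) (subst \<sigma> y)"
proof -
  have base: "subst \<sigma> (pmul t (pth p) (pth q)) = pmul t' (subst \<sigma> (pth p)) (subst \<sigma> (pth q) :: _ \<Rightarrow> 'k::field)"
    if "set (snd p) \<subseteq> E" for p q
    using gsub_pend[OF g that] by (simp add: pmul_pth subst_pth subst_zero)
  have step: "subst \<sigma> (pmul t (pth p) y) = pmul t' (subst \<sigma> (pth p)) (subst \<sigma> y)" if "set (snd p) \<subseteq> E" for p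
  proof (rule lin_ext[where x = y])
    show "linmap (\<lambda>y. subst \<sigma> (pmul t (pth p) y))"
      by (rule linmap_comp[OF linmap_subst linmap_pmul_right]) (simp add: fs_pmul fs_pth)
    show "linmap (\<lambda>y. pmul t' (subst \<sigma> (pth p)) (subst \<sigma> y))"
      by (rule linmap_comp[OF linmap_pmul_right linmap_subst]) (rule fs_subst)
    show "fs y" using y by (simp add: path_alg_iff)
  qed (rule base[OF that])
  show ?thesis
  proof (rule lin_ext[where x = x])
    show "linmap (\<lambda>x. subst \<sigma> (pmul t x y))"
      using y by (intro linmap_comp[OF linmap_subst linmap_pmul_left]) (simp add: fs_pmul path_alg_iff)
    show "linmap (\<lambda>x. pmul t' (subst \<sigma> x) (subst \<sigma> y))"
      by (rule linmap_comp[OF linmap_pmul_left linmap_subst]) (rule fs_subst)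
    show "fs x" using x by (simp add: path_alg_iff)
    show "subst \<sigma> (pmul t (pth p) y) = pmul t' (subst \<sigma> (pth p)) (subst \<sigma> y)" if "x p \<noteq> 0" for p
    proof -
      have "valid_path V E s t p" using x that unfolding path_alg_def by blast
      then show ?thesis by (intro step) (simp add: valid_path_def)
    qed
  qed
qed



lemma subst_ideal:
  assumes Q: "quiv V E s t" and Q': "quiv V' E' s' t'"
    and R: "R \<subseteq> path_alg V E s t" and R': "R' \<subseteq> path_alg V' E' s' t'"
    and g: "gsub V E s t V' E' s' t' \<sigma>"
    and RR: "\<And>x. x \<in> R \<Longrightarrow> subst \<sigma> x \<in> gen_ideal V' E' s' t' R'"
    and x: "x \<in> gen_ideal V E s t R"
  shows "subst \<sigma> x \<in> gen_ideal V' E' s' t' R'"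
  using x
proof (induction rule: gen_ideal.induct)
  case gi_zero then show ?case using ideal_zero[OF Q' R'] by (simp add: zero_eq subst_zero)
next
  case (gi_gen x) then show ?case by (rule RR)
next
  case (gi_add x y)
  then have "x \<in> path_alg V E s t" "y \<in> path_alg V E s t" using ideal_alg[OF Q R] by auto
  then have "subst \<sigma> (padd x y) = subst \<sigma> x + subst \<sigma> y"
    by (simp add: padd_eq linmap_add[OF linmap_subst] path_alg_iff)
  then show ?case using gi_add.IH ideal_add[OF Q' R'] by metis
next
  case (gi_mult x a b)
  then have xa: "x \<in> path_alg V E s t" using ideal_alg[OF Q R] by auto
  then have "subst \<sigma> (pmul t (pmul t a x) b) = pmul t' (pmul t' (subst \<sigma> a) (subst \<sigma> x)) (subst \<sigma> b)"
    using gi_mult by (simp add: subst_mult[OF g] alg_pmul)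
  moreover have "pmul t' (pmul t' (subst \<sigma> a) (subst \<sigma> x)) (subst \<sigma> b) \<in> gen_ideal V' E' s' t' R'"
    using gi_mult by (intro ideal_mul3[OF Q' R'] subst_alg[OF g]) auto
  ultimately show ?case by simp
qed

lemma cm_cm: "cm \<sigma> (cm \<tau> l) = cm (\<lambda>a. cm \<sigma> (\<tau> a)) l"
  by (induction l) auto

lemma subst_comp: assumes "fs x" shows "subst \<sigma> (subst \<tau> x) = subst (\<lambda>a. cm \<sigma> (\<tau> a)) x"
proof (rule lin_ext[OF _ linmap_subst assms])
  show "linmap (\<lambda>x. subst \<sigma> (subst \<tau> x))"
    by (rule linmap_comp[OF linmap_subst linmap_subst fs_subst])
qed (simp add: subst_pth cm_cm)

lemma subst_id: assumes x: "x \<in> path_alg V E s t" and r: "\<And>a. a \<in> E \<Longrightarrow> \<rho> a = [a]"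
  shows "subst \<rho> x = x"
proof (rule lin_ext[OF linmap_subst linmap_id])
  show "fs x" using x by (simp add: path_alg_iff)
  fix p assume "x p \<noteq> 0"
  then have "set (snd p) \<subseteq> E" using x unfolding path_alg_def valid_path_def by blast
  moreover have "set l \<subseteq> E \<Longrightarrow> cm \<rho> l = l" for l using r by (induction l) auto
  ultimately show "subst \<rho> (pth p) = pth p" by (simp add: subst_pth)
qed

lemma pone_sum: "finite V \<Longrightarrow> pone V = (\<Sum>v\<in>V. pth (v, []))"
proof (rule ext)
  fix q :: "'e path" assume "finite V"
  then show "pone V q = (\<Sum>v\<in>V. pth (v, [])) q"
    by (cases q) (auto simp: sum_fun_apply pth_def pone_def sum.delta intro!: sum.neutral)
qed

lemma subst_one: assumes "finite V" shows "subst \<sigma> (pone V :: _ \<Rightarrow> 'k::field) = pone V"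
proof -
  have "subst \<sigma> (pone V :: _ \<Rightarrow> 'k) = (\<Sum>v\<in>V. subst \<sigma> (pth (v, []) :: _ \<Rightarrow> 'k))"
    using assms by (simp add: pone_sum linmap_sum[OF _ linmap_subst] fs_pth)
  then show ?thesis using assms by (simp add: subst_pth pone_sum)
qed

context
  fixes V :: "nat set" and E :: "'e set" and s t :: "'e \<Rightarrow> nat" and R :: "('e path \<Rightarrow> 'k::field) set"
  assumes Q: "quiv V E s t" and R: "R \<subseteq> path_alg V E s t"
begin

lemma subst_cong_path:
  assumes g: "gsub V E s t V E s t \<rho>"
    and ra: "\<And>a. a \<in> E \<Longrightarrow> pth (s a, [a]) - pth (s a, \<rho> a) \<in> gen_ideal V E s t R"
  shows "valid_path V E s t (v, as) \<Longrightarrow> pth (v, as) - pth (v, cm \<rho> as) \<in> gen_ideal V E s t R"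
proof (induction as arbitrary: v)
  case Nil then show ?case using ideal_zero[OF Q R] by (metis concat.simps(1) list.map(1) diff_self)
next
  case (Cons a as)
  let ?I = "gen_ideal V E s t R"
  have a: "a \<in> E" "s a = v" "v \<in> V" and va: "valid_path V E s t (t a, as)"
    using Cons.prems Q by (auto simp: valid_path_def quiv_def)
  have ga: "\<rho> a \<noteq> []" "set (\<rho> a) \<subseteq> E" "is_chain s t (s a) (\<rho> a)" "t (last (\<rho> a)) = t a"
    using g a by (auto simp: gsub_def)
  then have pe: "pend t v (\<rho> a) = t a" by (simp add: pend_last)
  have vr: "valid_path V E s t (v, \<rho> a)" using ga a by (simp add: valid_path_def)
  have e1: "pth (v, a # as) = pmul t (pth (v, [a])) (pth (t a, as))" by (simp add: pmul_pth)
  have e2: "pth (v, cm \<rho> (a # as)) = pmul t (pth (v, \<rho> a)) (pth (t a, cm \<rho> as))" using pe by (simp add: pmul_pth)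
  have "pth (v, a # as) - pth (v, cm \<rho> (a # as)) =
     pmul t (pth (v, [a]) - pth (v, \<rho> a)) (pth (t a, as)) + pmul t (pth (v, \<rho> a)) (pth (t a, as) - pth (t a, cm \<rho> as))"
    unfolding e1 e2 by (simp add: pmul_diff_left pmul_diff_right)
  also have "\<dots> \<in> ?I"
  proof (rule ideal_add[OF Q R])
    show "pmul t (pth (v, [a]) - pth (v, \<rho> a)) (pth (t a, as)) \<in> ?I"
      using ra[of a] a by (intro ideal_rmul[OF Q R] pth_alg[OF va]) auto
    show "pmul t (pth (v, \<rho> a)) (pth (t a, as) - pth (t a, cm \<rho> as)) \<in> ?I"
      by (rule ideal_lmul[OF Q R, OF pth_alg[OF vr] Cons.IH[OF va]])
  qed
  finally show ?case .
qed

lemma subst_cong: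
  assumes g: "gsub V E s t V E s t \<rho>"
    and ra: "\<And>a. a \<in> E \<Longrightarrow> pth (s a, [a]) - pth (s a, \<rho> a) \<in> gen_ideal V E s t R"
    and y: "y \<in> path_alg V E s t"
  shows "y - subst \<rho> y \<in> gen_ideal V E s t R"
proof (rule lin_mem[OF linmap_diff[OF linmap_id linmap_subst] ideal_subsp[OF Q R]])
  show "fs y" using y by (simp add: path_alg_iff)
  fix p assume "y p \<noteq> 0"
  then have "valid_path V E s t p" using y unfolding path_alg_def by blast
  then show "pth p - subst \<rho> (pth p) \<in> gen_ideal V E s t R"
    using subst_cong_path[OF g ra, of "fst p" "snd p"] by (simp add: subst_pth)
qed

end



lemma path_diff_eq: assumes "fs f" "finite S" "supp f \<subseteq> S"
  shows "path_diff t h \<delta> f q = (\<Sum>p\<in>S. f p * dpath t h \<delta> p q)"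
  unfolding path_diff_def using assms by (intro sum.mono_neutral_left) auto

lemma linmap_path_diff: fixes \<delta> :: "'e \<Rightarrow> ('e path \<Rightarrow> 'k::field)" shows "linmap (path_diff t h \<delta>)"
proof (rule linmapI)
  fix x y :: "'e path \<Rightarrow> 'k" assume xy: "fs x" "fs y"
  show "path_diff t h \<delta> (x + y) = path_diff t h \<delta> x + path_diff t h \<delta> y"
  proof (rule ext)
    fix q
    let ?S = "supp x \<union> supp y"
    have "path_diff t h \<delta> (x + y) q = (\<Sum>p\<in>?S. (x + y) p * dpath t h \<delta> p q)"
      using xy by (intro path_diff_eq fs_add) auto
    also have "\<dots> = (\<Sum>p\<in>?S. x p * dpath t h \<delta> p q) + (\<Sum>p\<in>?S. y p * dpath t h \<delta> p q)"
      by (simp add: sum.distrib[symmetric] algebra_simps)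
    also have "\<dots> = path_diff t h \<delta> x q + path_diff t h \<delta> y q"
      using xy by (simp add: path_diff_eq[of _ ?S])
    finally show "path_diff t h \<delta> (x + y) q = (path_diff t h \<delta> x + path_diff t h \<delta> y) q" by simp
  qed
next
  fix c and x :: "'e path \<Rightarrow> 'k" assume x: "fs x"
  show "path_diff t h \<delta> (psmult c x) = psmult c (path_diff t h \<delta> x)"
  proof (rule ext)
    fix q
    have "path_diff t h \<delta> (psmult c x) q = (\<Sum>p\<in>supp x. (psmult c x) p * dpath t h \<delta> p q)"
      using x by (intro path_diff_eq fs_sm) (auto simp: psmult_def)
    also have "\<dots> = c * (\<Sum>p\<in>supp x. x p * dpath t h \<delta> p q)"
      by (simp add: sum_distrib_left psmult_def algebra_simps)
    also have "\<dots> = psmult c (path_diff t h \<delta> x) q"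
      using x by (simp add: path_diff_eq[of _ "supp x"] psmult_def)
    finally show "path_diff t h \<delta> (psmult c x) q = psmult c (path_diff t h \<delta> x) q" .
  qed
qed

lemma path_diff_pth: "path_diff t h \<delta> (pth p) = dpath t h \<delta> p"
proof (rule ext)
  fix q
  have "path_diff t h \<delta> (pth p) q = (\<Sum>p'\<in>{p}. pth p p' * dpath t h \<delta> p' q)"
    by (intro path_diff_eq fs_pth) (auto simp: pth_def)
  then show "path_diff t h \<delta> (pth p) q = dpath t h \<delta> p q" by (simp add: pth_def)
qed

definition sg :: "('e \<Rightarrow> int) \<Rightarrow> 'e list \<Rightarrow> 'k::field" where
  "sg h l = (if even (\<Sum>a\<leftarrow>l. h a) then 1 else -1)"

lemma dpath_sum: "dpath t h \<delta> (v, as) = (\<Sum>k<length as. psmult (sg h (take k as))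
   (pmul t (pmul t (pth (v, take k as)) (\<delta> (as ! k))) (pth (pend t v (take (Suc k) as), drop (Suc k) as))))"
  by (simp add: dpath_def fun_eq_iff sum_fun_apply psmult_def sg_def)

lemma fs_dpath: assumes "\<And>a. fs (\<delta> a)" shows "fs (dpath t h \<delta> p)"
proof -
  obtain v as where p: "p = (v, as)" by force
  show ?thesis unfolding p dpath_sum
    by (intro fs_sum fs_sm fs_pmul fs_pth assms) auto
qed

lemma fs_path_diff: assumes "\<And>a. fs (\<delta> a)" "fs f" shows "fs (path_diff t h \<delta> f)"
proof -
  have "path_diff t h \<delta> f = (\<Sum>p\<in>supp f. psmult (f p) (dpath t h \<delta> p))"
    using assms(2) by (simp add: fun_eq_iff sum_fun_apply psmult_def path_diff_def)
  then show ?thesis using assms by (simp add: fs_sum fs_sm fs_dpath)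
qed

lemma intertwine:
  fixes x :: "'e path \<Rightarrow> 'k::field" and \<psi> :: "'e \<Rightarrow> 'f"
  assumes Q: "quiv V E s t" and Q': "quiv V' E' s' t'"
    and R: "R \<subseteq> path_alg V E s t" and R': "R' \<subseteq> path_alg V' E' s' t'"
    and VV: "V \<subseteq> V'"
    and psi: "\<And>a. a \<in> E \<Longrightarrow> \<psi> a \<in> E' \<and> s' (\<psi> a) = s a \<and> t' (\<psi> a) = t a"
    and hh: "\<And>a. h' (\<psi> a) = h a"
    and dfs: "\<And>a. fs (\<delta> a)"
    and dalg: "\<And>a. a \<in> E \<Longrightarrow> \<delta> a \<in> path_alg V E s t"
    and dd: "\<And>a. a \<in> E \<Longrightarrow> \<delta>' (\<psi> a) - subst (\<lambda>a. [\<psi> a]) (\<delta> a) \<in> gen_ideal V' E' s' t' R'"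
    and x: "x \<in> path_alg V E s t"
  shows "path_diff t' h' \<delta>' (subst (\<lambda>a. [\<psi> a]) x) - subst (\<lambda>a. [\<psi> a]) (path_diff t h \<delta> x) \<in> gen_ideal V' E' s' t' R'"
proof -
  let ?\<sigma> = "\<lambda>a. [\<psi> a]"
  let ?I = "gen_ideal V' E' s' t' R'"
  have cmm: "cm ?\<sigma> l = map \<psi> l" for l by (induction l) auto
  have g: "gsub V E s t V' E' s' t' ?\<sigma>" using VV psi by (auto simp: gsub_def)
  have lin: "linmap (\<lambda>x. path_diff t' h' \<delta>' (subst ?\<sigma> x) - subst ?\<sigma> (path_diff t h \<delta> x))"
    by (intro linmap_diff linmap_comp[OF linmap_path_diff linmap_subst] linmap_comp[OF linmap_subst linmap_path_diff]
        fs_subst fs_path_diff dfs)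
  show ?thesis
  proof (rule lin_mem[OF lin ideal_subsp[OF Q' R']])
    show "fs x" using x by (simp add: path_alg_iff)
    fix p assume "x p \<noteq> 0"
    then have vp: "valid_path V E s t p" using x unfolding path_alg_def by blast
    obtain v as where p: "p = (v, as)" by force
    have vas: "v \<in> V" "set as \<subseteq> E" "is_chain s t v as" using vp p by (auto simp: valid_path_def)
    define P where "P k = (pth (v, take k as) :: _ \<Rightarrow> 'k)" for k
    define S where "S k = (pth (pend t v (take (Suc k) as), drop (Suc k) as) :: _ \<Rightarrow> 'k)" for k
    have PA: "P k \<in> path_alg V E s t" for k
      unfolding P_def using vas by (intro pth_alg) (auto simp: valid_path_def dest: in_set_takeD,
          metis append_take_drop_id chain_append)
    have SA: "S k \<in> path_alg V E s t" for k
    proof -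
      have ch: "is_chain s t v (take (Suc k) as) \<and> is_chain s t (pend t v (take (Suc k) as)) (drop (Suc k) as)"
        using vas(3) chain_append[of s t v "take (Suc k) as" "drop (Suc k) as"] by simp
      have st: "set (take (Suc k) as) \<subseteq> E" "set (drop (Suc k) as) \<subseteq> E"
        using vas(2) set_take_subset set_drop_subset by fast+
      have "pend t v (take (Suc k) as) \<in> V"
        using valid_pend[OF Q, of "(v, take (Suc k) as)"] ch st vas(1) by (auto simp: valid_path_def)
      then have "valid_path V E s t (pend t v (take (Suc k) as), drop (Suc k) as)"
        using ch st by (auto simp: valid_path_def)
      then show ?thesis unfolding S_def by (rule pth_alg)
    qed
    have dA: "k < length as \<Longrightarrow> \<delta> (as ! k) \<in> path_alg V E s t" for k
      using vas by (intro dalg) auto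
    have ps: "subst ?\<sigma> (P k) = pth (v, take k (map \<psi> as))" for k
      by (simp add: P_def subst_pth cmm take_map)
    have pend_eq: "pend t' v (map \<psi> l) = pend t v l" if "set l \<subseteq> E" for l
      using psi that by (intro pend_map) auto
    have ss: "subst ?\<sigma> (S k) = pth (pend t' v (take (Suc k) (map \<psi> as)), drop (Suc k) (map \<psi> as))" for k
    proof -
      have "set (take (Suc k) as) \<subseteq> E" using vas(2) set_take_subset by fast
      then show ?thesis using pend_eq[of "take (Suc k) as"] by (simp add: S_def subst_pth cmm take_map drop_map)
    qed
    have sgeq: "sg h' (take k (map \<psi> as)) = (sg h (take k as) :: 'k)" for k
      by (simp add: sg_def take_map comp_def hh)
    have fsd: "fs (pmul t (pmul t (P k) (\<delta> (as ! k))) (S k))" for k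
      unfolding P_def S_def by (intro fs_pmul fs_pth dfs)
    have "subst ?\<sigma> (path_diff t h \<delta> (pth p)) =
        (\<Sum>k<length as. psmult (sg h (take k as)) (subst ?\<sigma> (pmul t (pmul t (P k) (\<delta> (as ! k))) (S k))))"
      unfolding path_diff_pth p dpath_sum P_def[symmetric] S_def[symmetric]
      using fsd by (simp add: linmap_sum[OF _ linmap_subst] fs_sm linmap_sm[OF linmap_subst])
    also have "\<dots> = (\<Sum>k<length as. psmult (sg h (take k as))
        (pmul t' (pmul t' (pth (v, take k (map \<psi> as))) (subst ?\<sigma> (\<delta> (as ! k)))) (subst ?\<sigma> (S k))))"
      using PA SA dA by (intro sum.cong refl) (simp add: subst_mult[OF g] alg_pmul ps[symmetric])
    finally have e1: "subst ?\<sigma> (path_diff t h \<delta> (pth p)) = \<dots>" .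
    have e2: "path_diff t' h' \<delta>' (subst ?\<sigma> (pth p)) = (\<Sum>k<length as. psmult (sg h (take k as))
        (pmul t' (pmul t' (pth (v, take k (map \<psi> as))) (\<delta>' (\<psi> (as ! k)))) (subst ?\<sigma> (S k))))"
      unfolding subst_pth path_diff_pth p using ss sgeq by (simp add: dpath_sum cmm)
    have "path_diff t' h' \<delta>' (subst ?\<sigma> (pth p)) - subst ?\<sigma> (path_diff t h \<delta> (pth p)) =
       (\<Sum>k<length as. psmult (sg h (take k as))
        (pmul t' (pmul t' (pth (v, take k (map \<psi> as))) (\<delta>' (\<psi> (as ! k)) - subst ?\<sigma> (\<delta> (as ! k)))) (subst ?\<sigma> (S k))))"
      unfolding e1 e2 by (simp add: sum_subtractf[symmetric] sm_diff pmul_diff_left pmul_diff_right)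
    also have "\<dots> \<in> ?I"
    proof (intro subsp_sum[OF ideal_subsp[OF Q' R']] ideal_sm[OF Q' R'] ideal_mul3[OF Q' R'])
      fix k assume k: "k \<in> {..<length as}"
      show "(pth (v, take k (map \<psi> as)) :: _ \<Rightarrow> 'k) \<in> path_alg V' E' s' t'"
        using subst_alg[OF g PA] ps by simp
      show "subst ?\<sigma> (S k) \<in> path_alg V' E' s' t'" using subst_alg[OF g SA] .
      show "\<delta>' (\<psi> (as ! k)) - subst ?\<sigma> (\<delta> (as ! k)) \<in> ?I" using k vas by (intro dd) auto
    qed
    finally show "path_diff t' h' \<delta>' (subst ?\<sigma> (pth p)) - subst ?\<sigma> (path_diff t h \<delta> (pth p)) \<in> ?I" .
  qed
qed



lemma gsub_comp: assumes g1: "gsub V E s t V' E' s' t' \<sigma>" and g2: "gsub V' E' s' t' V'' E'' s'' t'' \<tau>"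
  shows "gsub V E s t V'' E'' s'' t'' (\<lambda>a. cm \<tau> (\<sigma> a))"
  unfolding gsub_def
proof (intro conjI ballI)
  show "V \<subseteq> V''" using g1 g2 by (auto simp: gsub_def)
  fix a assume a: "a \<in> E"
  then have sa: "\<sigma> a \<noteq> []" "set (\<sigma> a) \<subseteq> E'" "is_chain s' t' (s a) (\<sigma> a)" "t' (last (\<sigma> a)) = t a"
    using g1 by (auto simp: gsub_def)
  obtain b where b: "b \<in> set (\<sigma> a)" using sa(1) by (cases "\<sigma> a") auto
  then have "\<tau> b \<noteq> []" using sa g2 by (auto simp: gsub_def)
  then show ne: "cm \<tau> (\<sigma> a) \<noteq> []" using b by auto
  have "t'' (last (cm \<tau> (\<sigma> a))) = pend t'' 0 (cm \<tau> (\<sigma> a))"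
    by (simp only: pend_last[of t'' 0 "cm \<tau> (\<sigma> a)"] if_not_P[OF ne])
  also have "\<dots> = pend t' 0 (\<sigma> a)" using gsub_pend[OF g2 sa(2)] .
  also have "\<dots> = t a" using sa by (simp add: pend_last)
  finally show "t'' (last (cm \<tau> (\<sigma> a))) = t a" .
  show "set (cm \<tau> (\<sigma> a)) \<subseteq> E''" using sa g2 by (auto simp: gsub_def)
  show "is_chain s'' t'' (s a) (cm \<tau> (\<sigma> a))" using gsub_chain[OF g2 sa(2,3)] .
qed

lemma subst_diff: "fs x \<Longrightarrow> fs y \<Longrightarrow> subst \<sigma> (x - y) = subst \<sigma> x - subst \<sigma> y"
proof -
  assume xy: "fs x" "fs y"
  have e: "x - y = x + psmult (-1) y" by (simp add: sm_m1)
  have "subst \<sigma> (x + psmult (-1) y) = subst \<sigma> x + subst \<sigma> (psmult (-1) y)"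
    by (rule linmap_add[OF linmap_subst xy(1) fs_sm[OF xy(2)]])
  moreover have "subst \<sigma> (psmult (-1) y) = psmult (-1) (subst \<sigma> y)" by (rule linmap_sm[OF linmap_subst xy(2)])
  ultimately show ?thesis unfolding e sm_m1 by simp
qed

lemma subst_pth_diff: "subst \<sigma> (pth p - pth q) = pth (fst p, cm \<sigma> (snd p)) - pth (fst q, cm \<sigma> (snd q))"
  by (simp add: subst_diff fs_pth subst_pth)

fun psi :: "arrT \<Rightarrow> arrA list" where
  "psi (CrossL i) = [Edge (i - 1) i]"
| "psi (CrossR i) = [Edge i (i - 1)]"
| "psi Nail = [Theta]"
| "psi (Dot i) = (if i = 0 then [Edge 0 1, Edge 1 0] else [Edge i (i - 1), Edge (i - 1) i])"

lemma EA_up: "i < r \<Longrightarrow> Edge i (Suc i) \<in> arrowsA r" by (auto simp: arrowsA_def)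
lemma EA_dn: "i < r \<Longrightarrow> Edge (Suc i) i \<in> arrowsA r" by (auto simp: arrowsA_def)
lemma TA_in: "Theta \<in> arrowsA r" by (auto simp: arrowsA_def)
lemma arrowsA_cases[consumes 1, case_names U D T]:
  assumes "a \<in> arrowsA r"
  obtains (U) i where "i < r" "a = Edge i (Suc i)" | (D) i where "i < r" "a = Edge (Suc i) i" | (T) "a = Theta"
  using assms by (auto simp: arrowsA_def)
lemma arrowsT_cases[consumes 1, case_names L R D N]:
  assumes "a \<in> arrowsT r"
  obtains (L) i where "i < r" "a = CrossL (Suc i)" | (R) i where "i < r" "a = CrossR (Suc i)"
   | (D) i where "i \<le> r" "a = Dot i" | (N) "a = Nail"
  using assms unfolding arrowsT_def by (auto, metis Suc_le_eq Suc_pred, metis Suc_le_eq Suc_pred)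
lemma TL_in: "i < r \<Longrightarrow> CrossL (Suc i) \<in> arrowsT r" by (auto simp: arrowsT_def)
lemma TR_in: "i < r \<Longrightarrow> CrossR (Suc i) \<in> arrowsT r" by (auto simp: arrowsT_def)
lemma TD_in: "i \<le> r \<Longrightarrow> Dot i \<in> arrowsT r" by (auto simp: arrowsT_def)
lemma TN_in: "Nail \<in> arrowsT r" by (auto simp: arrowsT_def)

lemma quivA: "quiv (vertsA r) (arrowsA r) srcA tgtA"
  unfolding quiv_def vertsA_def by (auto elim!: arrowsA_cases)
lemma quivT: "quiv (vertsT r) (arrowsT r) srcT tgtT"
  unfolding quiv_def vertsT_def by (auto elim!: arrowsT_cases)

lemma assign_ok: "a \<in> arrowsA r \<Longrightarrow> assign a \<in> arrowsT r \<and> srcT (assign a) = srcA a \<and> tgtT (assign a) = tgtA a \<and> degT (assign a) = degA a"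
  by (auto elim!: arrowsA_cases intro: TL_in TR_in TN_in)

lemma gsubPhi: "gsub (vertsA r) (arrowsA r) srcA tgtA (vertsT r) (arrowsT r) srcT tgtT (\<lambda>a. [assign a])"
  unfolding gsub_def using assign_ok[of _ r] by (auto simp: vertsA_def vertsT_def)

lemma gsubPsi: assumes r: "1 \<le> r" shows "gsub (vertsT r) (arrowsT r) srcT tgtT (vertsA r) (arrowsA r) srcA tgtA psi"
  unfolding gsub_def
proof (intro conjI ballI)
  show "vertsT r \<subseteq> vertsA r" by (simp add: vertsA_def vertsT_def)
  fix a assume a: "a \<in> arrowsT r"
  have "psi a \<noteq> [] \<and> set (psi a) \<subseteq> arrowsA r \<and> is_chain srcA tgtA (srcT a) (psi a) \<and> tgtA (last (psi a)) = tgtT a"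
    using a
  proof (cases rule: arrowsT_cases)
    case (D i)
    show ?thesis
    proof (cases i)
      case 0 then show ?thesis using D r EA_up[of 0 r] EA_dn[of 0 r] by (simp add: One_nat_def)
    next
      case (Suc k) then show ?thesis using D r EA_up[of k r] EA_dn[of k r] by simp
    qed
  qed (auto intro: EA_up EA_dn TA_in)
  then show "psi a \<noteq> []" "set (psi a) \<subseteq> arrowsA r" "is_chain srcA tgtA (srcT a) (psi a)" "tgtA (last (psi a)) = tgtT a"
    by auto
qed



lemma mem_setI: "X = f (Suc k) \<Longrightarrow> P (Suc k) \<Longrightarrow> X \<in> {f i | i. P i}" by blast

lemma rT1: "k < r \<Longrightarrow> pth (k, [Dot k, CrossL (Suc k)]) - pth (k, [CrossL (Suc k), Dot (Suc k)]) \<in> relsT r"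
  unfolding relsT_def by (intro UnI1 mem_setI) (auto simp: pdiff_eq)
lemma rT2: "k < r \<Longrightarrow> pth (Suc k, [Dot (Suc k), CrossR (Suc k)]) - pth (Suc k, [CrossR (Suc k), Dot k]) \<in> relsT r"
proof -
  assume "k < r"
  then have "pth (Suc k, [Dot (Suc k), CrossR (Suc k)]) - pth (Suc k, [CrossR (Suc k), Dot k]) \<in>
    {pdiff (pth (i, [Dot i, CrossR i])) (pth (i, [CrossR i, Dot (i-1)])) | i. 1 \<le> i \<and> i \<le> r}"
    by (intro mem_setI) (auto simp: pdiff_eq)
  then show ?thesis unfolding relsT_def by blast
qed
lemma rT3: "k < r \<Longrightarrow> pth (Suc k, [CrossR (Suc k), CrossL (Suc k)]) - pth (Suc k, [Dot (Suc k)]) \<in> relsT r"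
proof -
  assume "k < r"
  then have "pth (Suc k, [CrossR (Suc k), CrossL (Suc k)]) - pth (Suc k, [Dot (Suc k)]) \<in>
    {pdiff (pth (i, [CrossR i, CrossL i])) (pth (i, [Dot i])) | i. 1 \<le> i \<and> i \<le> r}"
    by (intro mem_setI) (auto simp: pdiff_eq)
  then show ?thesis unfolding relsT_def by blast
qed
lemma rT4: "k < r \<Longrightarrow> pth (k, [CrossL (Suc k), CrossR (Suc k)]) - pth (k, [Dot k]) \<in> relsT r"
proof -
  assume "k < r"
  then have "pth (k, [CrossL (Suc k), CrossR (Suc k)]) - pth (k, [Dot k]) \<in>
    {pdiff (pth (i-1, [CrossL i, CrossR i])) (pth (i-1, [Dot (i-1)])) | i. 1 \<le> i \<and> i \<le> r}"
    by (intro mem_setI) (auto simp: pdiff_eq)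
  then show ?thesis unfolding relsT_def by blast
qed
lemma rT5: "pth (0, [Nail, Dot 0]) - pth (0, [Dot 0, Nail]) \<in> relsT r"
  unfolding relsT_def by (auto simp: pdiff_eq)
lemma rT6: "pth (0, [Nail, Nail]) \<in> relsT r"
  unfolding relsT_def by auto

lemma relsT_cases[consumes 1, case_names R1 R2 R3 R4 R5 R6]:
  assumes "x \<in> relsT r"
  obtains (R1) k where "k < r" "x = pth (k, [Dot k, CrossL (Suc k)]) - pth (k, [CrossL (Suc k), Dot (Suc k)])"
  | (R2) k where "k < r" "x = pth (Suc k, [Dot (Suc k), CrossR (Suc k)]) - pth (Suc k, [CrossR (Suc k), Dot k])"
  | (R3) k where "k < r" "x = pth (Suc k, [CrossR (Suc k), CrossL (Suc k)]) - pth (Suc k, [Dot (Suc k)])"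
  | (R4) k where "k < r" "x = pth (k, [CrossL (Suc k), CrossR (Suc k)]) - pth (k, [Dot k])"
  | (R5) "x = pth (0, [Nail, Dot 0]) - pth (0, [Dot 0, Nail])"
  | (R6) "x = pth (0, [Nail, Nail])"
proof -
  from assms consider
    (a) i where "1 \<le> i" "i \<le> r" "x = pth (i-1, [Dot (i-1), CrossL i]) - pth (i-1, [CrossL i, Dot i])"
  | (b) i where "1 \<le> i" "i \<le> r" "x = pth (i, [Dot i, CrossR i]) - pth (i, [CrossR i, Dot (i-1)])"
  | (c) i where "1 \<le> i" "i \<le> r" "x = pth (i, [CrossR i, CrossL i]) - pth (i, [Dot i])"
  | (d) i where "1 \<le> i" "i \<le> r" "x = pth (i-1, [CrossL i, CrossR i]) - pth (i-1, [Dot (i-1)])"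
  | (e) "x = pth (0, [Nail, Dot 0]) - pth (0, [Dot 0, Nail])"
  | (f) "x = pth (0, [Nail, Nail])"
    unfolding relsT_def pdiff_eq by blast
  then show ?thesis
  proof cases
    case (a i) then obtain k where "i = Suc k" by (cases i) auto
    then show ?thesis using a R1[of k] by auto
  next
    case (b i) then obtain k where "i = Suc k" by (cases i) auto
    then show ?thesis using b R2[of k] by auto
  next
    case (c i) then obtain k where "i = Suc k" by (cases i) auto
    then show ?thesis using c R3[of k] by auto
  next
    case (d i) then obtain k where "i = Suc k" by (cases i) auto
    then show ?thesis using d R4[of k] by auto
  qed (use R5 R6 in auto)
qed

lemma rA1: "Suc k < r \<Longrightarrow> pth (Suc k, [Edge (Suc k) k, Edge k (Suc k)]) - pth (Suc k, [Edge (Suc k) (Suc (Suc k)), Edge (Suc (Suc k)) (Suc k)]) \<in> relsA r"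
proof -
  assume "Suc k < r"
  then have "pth (Suc k, [Edge (Suc k) k, Edge k (Suc k)]) - pth (Suc k, [Edge (Suc k) (Suc (Suc k)), Edge (Suc (Suc k)) (Suc k)]) \<in>
    {pdiff (pth (i, [Edge i (i-1), Edge (i-1) i])) (pth (i, [Edge i (i+1), Edge (i+1) i])) | i. 0 < i \<and> i < r}"
    by (intro mem_setI) (auto simp: pdiff_eq)
  then show ?thesis unfolding relsA_def by blast
qed
lemma rA2: "pth (0, [Theta, Edge 0 1, Edge 1 0]) - pth (0, [Edge 0 1, Edge 1 0, Theta]) \<in> relsA r"
  unfolding relsA_def by (auto simp: pdiff_eq)
lemma rA3: "pth (0, [Theta, Theta]) \<in> relsA r"
  unfolding relsA_def by auto

lemma relsA_cases[consumes 1, case_names R1 R2 R3]: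
  assumes "x \<in> relsA r"
  obtains (R1) k where "Suc k < r" "x = pth (Suc k, [Edge (Suc k) k, Edge k (Suc k)]) - pth (Suc k, [Edge (Suc k) (Suc (Suc k)), Edge (Suc (Suc k)) (Suc k)])"
  | (R2) "x = pth (0, [Theta, Edge 0 1, Edge 1 0]) - pth (0, [Edge 0 1, Edge 1 0, Theta])"
  | (R3) "x = pth (0, [Theta, Theta])"
proof -
  from assms consider
    (a) i where "0 < i" "i < r" "x = pth (i, [Edge i (i-1), Edge (i-1) i]) - pth (i, [Edge i (i+1), Edge (i+1) i])"
  | (b) "x = pth (0, [Theta, Edge 0 1, Edge 1 0]) - pth (0, [Edge 0 1, Edge 1 0, Theta])"
  | (c) "x = pth (0, [Theta, Theta])"
    unfolding relsA_def pdiff_eq by blast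
  then show ?thesis
  proof cases
    case (a i) then obtain k where "i = Suc k" by (cases i) auto
    then show ?thesis using a R1[of k] by auto
  qed (use R2 R3 in auto)
qed



lemma EA01: "0 < r \<Longrightarrow> Edge 0 1 \<in> arrowsA r" using EA_up[of 0 r] by simp
lemma EA10: "0 < r \<Longrightarrow> Edge 1 0 \<in> arrowsA r" using EA_dn[of 0 r] by simp
lemma TL1: "0 < r \<Longrightarrow> CrossL 1 \<in> arrowsT r" using TL_in[of 0 r] by simp
lemma TR1: "0 < r \<Longrightarrow> CrossR 1 \<in> arrowsT r" using TR_in[of 0 r] by simp

context
  fixes r :: nat
  assumes r: "1 \<le> r"
begin

lemma r0: "0 < r" using r by simp

lemma relsA_alg: "relsA r \<subseteq> path_alg (vertsA r) (arrowsA r) srcA tgtA"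
proof
  fix x :: "_ \<Rightarrow> 'k::field" assume "x \<in> relsA r"
  then show "x \<in> path_alg (vertsA r) (arrowsA r) srcA tgtA"
    by (cases rule: relsA_cases)
      (auto simp: valid_path_def vertsA_def r0 EA01 EA10 TA_in intro!: alg_diff pth_alg EA_up EA_dn)
qed

lemma relsT_alg: "relsT r \<subseteq> path_alg (vertsT r) (arrowsT r) srcT tgtT"
proof
  fix x :: "_ \<Rightarrow> 'k::field" assume "x \<in> relsT r"
  then show "x \<in> path_alg (vertsT r) (arrowsT r) srcT tgtT"
    by (cases rule: relsT_cases)
      (auto simp: valid_path_def vertsT_def TN_in intro!: alg_diff pth_alg TL_in TR_in TD_in)
qed

abbreviation "IA \<equiv> gen_ideal (vertsA r) (arrowsA r) srcA tgtA (relsA r)"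
abbreviation "IT \<equiv> gen_ideal (vertsT r) (arrowsT r) srcT tgtT (relsT r)"


lemma Phi_rels: fixes x :: "arrA path \<Rightarrow> 'k::field" assumes x: "x \<in> relsA r"
  shows "subst (\<lambda>a. [assign a]) x \<in> IT"
  using x
proof (cases rule: relsA_cases)
  case (R1 k)
  have "subst (\<lambda>a. [assign a]) x =
     (pth (Suc k, [CrossR (Suc k), CrossL (Suc k)]) - pth (Suc k, [Dot (Suc k)]))
   - (pth (Suc k, [CrossL (Suc (Suc k)), CrossR (Suc (Suc k))]) - pth (Suc k, [Dot (Suc k)]))"
    unfolding R1 subst_pth_diff by simp
  also have "\<dots> \<in> IT"
  proof -
    have "k < r" using R1 by simp
    then show ?thesis using R1 ideal_diff[OF quivT relsT_alg, OF ideal_gen[OF quivT relsT_alg, OF rT3[of k r]] ideal_gen[OF quivT relsT_alg, OF rT4[of "Suc k" r]]]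
      by simp
  qed
  finally show ?thesis .
next
  case R2
  have "subst (\<lambda>a. [assign a]) x =
     pmul tgtT (pth (0, [Nail])) (pth (0, [CrossL 1, CrossR 1]) - pth (0, [Dot 0]))
   + (pth (0, [Nail, Dot 0]) - pth (0, [Dot 0, Nail]))
   - pmul tgtT (pth (0, [CrossL 1, CrossR 1]) - pth (0, [Dot 0])) (pth (0, [Nail]))"
    unfolding R2 subst_pth_diff by (simp add: pmul_diff_left pmul_diff_right pmul_pth)
  also have "\<dots> \<in> IT"
  proof -
    have n: "pth (0, [Nail]) \<in> path_alg (vertsT r) (arrowsT r) srcT tgtT"
      by (rule pth_alg) (auto simp: valid_path_def vertsT_def TN_in)
    have a: "pth (0, [CrossL 1, CrossR 1]) - pth (0, [Dot 0]) \<in> IT"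
      using rT4[of 0 r] r0 by (intro ideal_gen[OF quivT relsT_alg]) simp
    have b: "pth (0, [Nail, Dot 0]) - pth (0, [Dot 0, Nail]) \<in> IT"
      using rT5[of r] by (intro ideal_gen[OF quivT relsT_alg])
    show ?thesis
      by (intro ideal_diff[OF quivT relsT_alg, OF ideal_add[OF quivT relsT_alg]] ideal_lmul[OF quivT relsT_alg, OF n a]
          ideal_rmul[OF quivT relsT_alg, OF n a] b)
  qed
  finally show ?thesis .
next
  case R3
  then show ?thesis using ideal_gen[OF quivT relsT_alg rT6[of r]] by (simp add: subst_pth)
qed

lemma Psi_rels: fixes x :: "arrT path \<Rightarrow> 'k::field" assumes x: "x \<in> relsT r"
  shows "subst psi x \<in> IA"
  using x
proof (cases rule: relsT_cases)
  case (R1 k)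
  show ?thesis
  proof (cases k)
    case 0 then show ?thesis using R1 ideal_zero[OF quivA relsA_alg] by (simp add: subst_pth_diff)
  next
    case (Suc m)
    have "subst psi x = pmul tgtA (pth (Suc m, [Edge (Suc m) m, Edge m (Suc m)]) - pth (Suc m, [Edge (Suc m) (Suc (Suc m)), Edge (Suc (Suc m)) (Suc m)]))
       (pth (Suc m, [Edge (Suc m) (Suc (Suc m))]))"
      using R1 Suc by (simp add: subst_pth_diff pmul_diff_left pmul_pth)
    also have "\<dots> \<in> IA"
      using R1 Suc by (intro ideal_rmul[OF quivA relsA_alg] pth_alg ideal_gen[OF quivA relsA_alg] rA1)
        (auto simp: valid_path_def vertsA_def intro: EA_up)
    finally show ?thesis .
  qed
next
  case (R2 k)
  show ?thesis
  proof (cases k)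
    case 0 then show ?thesis using R2 ideal_zero[OF quivA relsA_alg] by (simp add: subst_pth_diff)
  next
    case (Suc m)
    have "subst psi x = - pmul tgtA (pth (Suc (Suc m), [Edge (Suc (Suc m)) (Suc m)]))
       (pth (Suc m, [Edge (Suc m) m, Edge m (Suc m)]) - pth (Suc m, [Edge (Suc m) (Suc (Suc m)), Edge (Suc (Suc m)) (Suc m)]))"
      using R2 Suc by (simp add: subst_pth_diff pmul_diff_right pmul_pth)
    also have "\<dots> \<in> IA"
      using R2 Suc by (intro ideal_uminus[OF quivA relsA_alg] ideal_lmul[OF quivA relsA_alg] pth_alg ideal_gen[OF quivA relsA_alg] rA1)
        (auto simp: valid_path_def vertsA_def intro: EA_dn)
    finally show ?thesis .
  qed
next
  case (R3 k)
  then show ?thesis using ideal_zero[OF quivA relsA_alg] by (simp add: subst_pth_diff)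
next
  case (R4 k)
  show ?thesis
  proof (cases k)
    case 0 then show ?thesis using R4 ideal_zero[OF quivA relsA_alg] by (simp add: subst_pth_diff)
  next
    case (Suc m)
    have "subst psi x = - (pth (Suc m, [Edge (Suc m) m, Edge m (Suc m)]) - pth (Suc m, [Edge (Suc m) (Suc (Suc m)), Edge (Suc (Suc m)) (Suc m)]))"
      using R4 Suc by (simp add: subst_pth_diff)
    also have "\<dots> \<in> IA"
      using R4 Suc by (intro ideal_uminus[OF quivA relsA_alg] ideal_gen[OF quivA relsA_alg] rA1) auto
    finally show ?thesis .
  qed
next
  case R5
  then show ?thesis using ideal_gen[OF quivA relsA_alg rA2[of r]] by (simp add: subst_pth_diff)
next
  case R6
  then show ?thesis using ideal_gen[OF quivA relsA_alg rA3[of r]] by (simp add: subst_pth)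
qed

lemma rho_cong: assumes a: "a \<in> arrowsT r"
  shows "(pth (srcT a, [a]) :: _ \<Rightarrow> 'k::field) - pth (srcT a, cm (\<lambda>b. [assign b]) (psi a)) \<in> IT"
  using a
proof (cases rule: arrowsT_cases)
  case (D i)
  show ?thesis
  proof (cases i)
    case 0
    then have "(pth (srcT a, [a]) :: _ \<Rightarrow> 'k::field) - pth (srcT a, cm (\<lambda>b. [assign b]) (psi a)) =
      - (pth (0, [CrossL 1, CrossR 1]) - pth (0, [Dot 0]))" using D by simp
    also have "\<dots> \<in> IT" using rT4[of 0 r] r0 by (intro ideal_uminus[OF quivT relsT_alg] ideal_gen[OF quivT relsT_alg]) simp
    finally show ?thesis .
  next
    case (Suc m)
    then have "(pth (srcT a, [a]) :: _ \<Rightarrow> 'k::field) - pth (srcT a, cm (\<lambda>b. [assign b]) (psi a)) =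
      - (pth (Suc m, [CrossR (Suc m), CrossL (Suc m)]) - pth (Suc m, [Dot (Suc m)]))" using D by simp
    also have "\<dots> \<in> IT" using rT3[of m r] D Suc by (intro ideal_uminus[OF quivT relsT_alg] ideal_gen[OF quivT relsT_alg]) simp
    finally show ?thesis .
  qed
qed (use ideal_zero[OF quivT relsT_alg] in auto)

lemma delta_cong: assumes a: "a \<in> arrowsA r"
  shows "(deltaT (assign a) :: _ \<Rightarrow> 'k::field) - subst (\<lambda>b. [assign b]) (deltaA a) \<in> IT"
  using a
proof (cases rule: arrowsA_cases)
  case T
  then have "(deltaT (assign a) :: _ \<Rightarrow> 'k::field) - subst (\<lambda>b. [assign b]) (deltaA a) =
      - (pth (0, [CrossL 1, CrossR 1]) - pth (0, [Dot 0]))" by (simp add: subst_pth)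
  also have "\<dots> \<in> IT" using rT4[of 0 r] r0 by (intro ideal_uminus[OF quivT relsT_alg] ideal_gen[OF quivT relsT_alg]) simp
  finally show ?thesis .
qed (use ideal_zero[OF quivT relsT_alg] in \<open>auto simp: zero_eq subst_zero\<close>)

lemma deltaA_alg: "a \<in> arrowsA r \<Longrightarrow> (deltaA a :: _ \<Rightarrow> 'k::field) \<in> path_alg (vertsA r) (arrowsA r) srcA tgtA"
  using EA_up[of 0 r] EA_dn[of 0 r] r0
  by (cases a) (auto simp: zero_eq alg_zero valid_path_def vertsA_def intro!: pth_alg)

lemma deltaA_fs: "fs (deltaA a :: _ \<Rightarrow> 'k::field)"
  by (cases a) (auto simp: fs_pth)

end



lemma psi_assign: "a \<in> arrowsA r \<Longrightarrow> cm psi [assign a] = [a]"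
  by (cases rule: arrowsA_cases) auto

lemma hh: "fst (degT (assign a)) = fst (degA a)"
  by (cases a) auto

theorem proposition7p2:
  fixes r :: nat
  assumes "r \<ge> 1"
  defines "\<Phi> \<equiv> (pmap assign :: (arrA path \<Rightarrow> 'k::field) \<Rightarrow> (arrT path \<Rightarrow> 'k))"
  shows
    "(\<forall>a\<in>arrowsA r. assign a \<in> arrowsT r \<and> srcT (assign a) = srcA a
        \<and> tgtT (assign a) = tgtA a \<and> degT (assign a) = degA a)
   \<and> (\<forall>x\<in>algA r. \<Phi> x \<in> algT r)
   \<and> (\<forall>x\<in>algA r. \<forall>y\<in>algA r. \<forall>c. \<Phi> (padd (psmult c x) y) = padd (psmult c (\<Phi> x)) (\<Phi> y))
   \<and> (\<forall>x\<in>algA r. \<forall>y\<in>algA r. \<Phi> (pmul tgtA x y) = pmul tgtT (\<Phi> x) (\<Phi> y))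
   \<and> \<Phi> (pone (vertsA r)) = pone (vertsT r)
   \<and> (\<forall>x\<in>idealA r. \<Phi> x \<in> idealT r)
   \<and> (\<forall>x\<in>algA r. \<Phi> x \<in> idealT r \<longrightarrow> x \<in> idealA r)
   \<and> (\<forall>y\<in>algT r. \<exists>x\<in>algA r. pdiff y (\<Phi> x) \<in> idealT r)
   \<and> (\<forall>x\<in>algA r. pdiff (dT (\<Phi> x)) (\<Phi> (dA x)) \<in> idealT r)"
proof -
  have r: "1 \<le> r" using assms by simp
  let ?\<sigma> = "\<lambda>a. [assign a]"
  have Phi: "\<Phi> = subst ?\<sigma>" unfolding \<Phi>_def by (simp add: fun_eq_iff pmap_subst)
  have P1: "\<forall>a\<in>arrowsA r. assign a \<in> arrowsT r \<and> srcT (assign a) = srcA a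
        \<and> tgtT (assign a) = tgtA a \<and> degT (assign a) = degA a"
    using assign_ok by blast
  have P2: "\<forall>x\<in>algA r. \<Phi> x \<in> algT r"
    unfolding Phi algA_def algT_def using subst_alg[OF gsubPhi] by blast
  have P3: "\<forall>x\<in>algA r. \<forall>y\<in>algA r. \<forall>c. \<Phi> (padd (psmult c x) y) = padd (psmult c (\<Phi> x)) (\<Phi> y)"
  proof (intro ballI allI)
    fix x y :: "arrA path \<Rightarrow> 'k" and c assume "x \<in> algA r" "y \<in> algA r"
    then have f: "fs x" "fs y" by (auto simp: algA_def path_alg_iff)
    show "\<Phi> (padd (psmult c x) y) = padd (psmult c (\<Phi> x)) (\<Phi> y)"
      unfolding Phi padd_eq linmap_add[OF linmap_subst fs_sm[OF f(1)] f(2)] linmap_sm[OF linmap_subst f(1)] ..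
  qed
  have P4: "\<forall>x\<in>algA r. \<forall>y\<in>algA r. \<Phi> (pmul tgtA x y) = pmul tgtT (\<Phi> x) (\<Phi> y)"
    unfolding Phi algA_def using subst_mult[OF gsubPhi] by blast
  have P5: "\<Phi> (pone (vertsA r)) = pone (vertsT r)"
    unfolding Phi by (simp add: subst_one vertsA_def vertsT_def)
  have P6: "\<forall>x\<in>idealA r. \<Phi> x \<in> idealT r"
    unfolding Phi idealA_def idealT_def
    using subst_ideal[OF quivA quivT relsA_alg[OF r] relsT_alg[OF r] gsubPhi Phi_rels[OF r]] by blast
  have P7: "\<forall>x\<in>algA r. \<Phi> x \<in> idealT r \<longrightarrow> x \<in> idealA r"
  proof (intro ballI impI)
    fix x :: "arrA path \<Rightarrow> 'k" assume x: "x \<in> algA r" and px: "\<Phi> x \<in> idealT r"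
    have "subst psi (\<Phi> x) \<in> idealA r"
      using px subst_ideal[OF quivT quivA relsT_alg[OF r] relsA_alg[OF r] gsubPsi[OF r] Psi_rels[OF r]]
      unfolding idealA_def idealT_def by blast
    moreover have "subst psi (\<Phi> x) = x"
    proof -
      have "subst psi (subst ?\<sigma> x) = subst (\<lambda>a. cm psi [assign a]) x"
        by (rule subst_comp) (use x in \<open>simp add: algA_def path_alg_iff\<close>)
      also have "\<dots> = x" using x unfolding algA_def by (rule subst_id) (rule psi_assign)
      finally show ?thesis unfolding Phi .
    qed
    ultimately show "x \<in> idealA r" by simp
  qed
  have P8: "\<forall>y\<in>algT r. \<exists>x\<in>algA r. pdiff y (\<Phi> x) \<in> idealT r"
  proof
    fix y :: "arrT path \<Rightarrow> 'k" assume y: "y \<in> algT r"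
    have xa: "subst psi y \<in> algA r"
      using y unfolding algA_def algT_def by (rule subst_alg[OF gsubPsi[OF r]])
    have "pdiff y (\<Phi> (subst psi y)) = y - subst (\<lambda>a. cm ?\<sigma> (psi a)) y"
      unfolding Phi pdiff_eq using y by (simp add: subst_comp algT_def path_alg_iff)
    also have "\<dots> \<in> idealT r"
      unfolding idealT_def
      using subst_cong[OF quivT relsT_alg[OF r] gsub_comp[OF gsubPsi[OF r] gsubPhi] rho_cong[OF r] y[unfolded algT_def]] .
    finally show "\<exists>x\<in>algA r. pdiff y (\<Phi> x) \<in> idealT r" using xa by blast
  qed
  have P9: "\<forall>x\<in>algA r. pdiff (dT (\<Phi> x)) (\<Phi> (dA x)) \<in> idealT r"
  proof
    fix x :: "arrA path \<Rightarrow> 'k" assume x: "x \<in> algA r"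
    show "pdiff (dT (\<Phi> x)) (\<Phi> (dA x)) \<in> idealT r"
      unfolding Phi pdiff_eq dT_def dA_def idealT_def
      by (rule intertwine[OF quivA quivT relsA_alg[OF r] relsT_alg[OF r]])
        (use x assign_ok deltaA_fs deltaA_alg[OF r] delta_cong[OF r] in \<open>auto simp: vertsA_def vertsT_def hh algA_def\<close>)
  qed
  show ?thesis using P1 P2 P3 P4 P5 P6 P7 P8 P9 by blast
qed

end
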